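(* Let $n\ge1$, $G=\mathbb Z/n\mathbb Z$, $\omega$ a normalized 3-cocycle of $G$ with values in $\mathbb F^\times$, $X,Y$ finite $G$-sets, and let $(F,s):\mathcal M(X,\Psi_X)\to\mathcal M(Y,\Psi_Y)$ be a simple $\mathrm{Vec}_G^\omega$-module functor. Then there is an orbit $\Gamma$ of $X\times Y$ under the diagonal $G$-action such that $m^F_{xy}:=\dim_{\mathbb F}\mathrm{Hom}(F(x),y)$ equals $1$ for $(x,y)\in\Gamma$ and $0$ otherwise.
   Context: $\mathbb F$ is an algebraically closed field. $\mathrm{Vec}_G^\omega$: monoidal category of finite-dimensional $G$-graded $\mathbb F$-vector spaces, simple objects $\delta^g$, $\delta^g\otimes\delta^h=\delta^{gh}$, associator $a_{\delta^g,\delta^h,\delta^k}=\omega(g,h,k)\mathrm{id}$ for a normalized 3-cocycle $\omega$. For a $G$-set $X$ and a normalized $\Psi:G\times G\times X\to\mathbb F^\times$ with $\Psi(h,k,g^{-1}\cdot x)\Psi^{-1}(gh,k,x)\Psi(g,hk,x)\Psi^{-1}(g,h,x)=\omega^{-1}(g,h,k)$, $\mathcal M(X,\Psi)$ is the category of finite-dimensional $X$-graded vector spaces (simple objects $x\in X$) with $\delta^g\triangleright x=g\cdot x$ and module constraint $m_{\delta^g,\delta^h,x}=\Psi(g,h,(gh)\cdot x)\mathrm{id}_{(gh)\cdot x}$. A module functor $(F,s)$ is an $\mathbb F$-linear functor with natural isomorphism $s_{C,M}:F(C\triangleright M)\to C\triangleright F(M)$ satisfying $m'_{C,D,F(M)}\circ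 s_{C\otimes D,M}=(\mathrm{id}_C\triangleright s_{D,M})\circ s_{C,D\triangleright M}\circ F(m_{C,D,M})$; morphisms are natural transformations compatible with $s$. It is simple if it is simple in the abelian category of module functors $\mathcal M(X,\Psi_X)\to\mathcal M(Y,\Psi_Y)$ and their morphisms. *)

theory Defs
  imports "Jordan_Normal_Form.Matrix" "HOL-Computational_Algebra.Polynomial"
begin

text \<open>The cyclic group Z/nZ is {0..<n} with addition mod n.
An object of the module category M(X,Psi) (finite-dimensional X-graded spaces)
is a dimension function d on X (zero outside X); a morphism d -> e is a family
of matrices f x of size (e x) x (d x), x in X (the 0x0 matrix outside X).\<close>

definition alg_closed_field :: "'a::field itself \<Rightarrow> bool" where
  "alg_closed_field T = (\<forall>p::'a poly. degree p \<ge> 1 \<longrightarrow> (\<exists>z. poly p z = 0))"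

definition ginv :: "nat \<Rightarrow> nat \<Rightarrow> nat" where
  "ginv n g = (n - g mod n) mod n"

definition is_Gset :: "nat \<Rightarrow> 'x set \<Rightarrow> (nat \<Rightarrow> 'x \<Rightarrow> 'x) \<Rightarrow> bool" where
  "is_Gset n X act =
     ((\<forall>g<n. \<forall>x\<in>X. act g x \<in> X) \<and> (\<forall>x\<in>X. act 0 x = x) \<and>
      (\<forall>g<n. \<forall>h<n. \<forall>x\<in>X. act ((g + h) mod n) x = act g (act h x)))"

definition normalized_3cocycle :: "nat \<Rightarrow> (nat \<Rightarrow> nat \<Rightarrow> nat \<Rightarrow> 'a::field) \<Rightarrow> bool" where
  "normalized_3cocycle n \<omega> =
     ((\<forall>g<n. \<forall>h<n. \<forall>k<n. \<omega> g h k \<noteq> 0) \<and>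
      (\<forall>g<n. \<forall>h<n. \<omega> 0 g h = 1 \<and> \<omega> g 0 h = 1 \<and> \<omega> g h 0 = 1) \<and>
      (\<forall>g<n. \<forall>h<n. \<forall>k<n. \<forall>l<n.
         \<omega> h k l * \<omega> g ((h + k) mod n) l * \<omega> g h k
           = \<omega> ((g + h) mod n) k l * \<omega> g h ((k + l) mod n)))"

definition is_Psi :: "nat \<Rightarrow> (nat \<Rightarrow> nat \<Rightarrow> nat \<Rightarrow> 'a::field) \<Rightarrow> 'x set \<Rightarrow>
    (nat \<Rightarrow> 'x \<Rightarrow> 'x) \<Rightarrow> (nat \<Rightarrow> nat \<Rightarrow> 'x \<Rightarrow> 'a) \<Rightarrow> bool" where
  "is_Psi n \<omega> X act \<Psi> =
     ((\<forall>g<n. \<forall>h<n. \<forall>x\<in>X. \<Psi> g h x \<noteq> 0) \<and>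
      (\<forall>g<n. \<forall>x\<in>X. \<Psi> 0 g x = 1 \<and> \<Psi> g 0 x = 1) \<and>
      (\<forall>g<n. \<forall>h<n. \<forall>k<n. \<forall>x\<in>X.
         \<Psi> h k (act (ginv n g) x) * inverse (\<Psi> ((g + h) mod n) k x) *
         \<Psi> g ((h + k) mod n) x * inverse (\<Psi> g h x) = inverse (\<omega> g h k)))"

definition objs :: "'x set \<Rightarrow> ('x \<Rightarrow> nat) set" where
  "objs X = {d. \<forall>x. x \<notin> X \<longrightarrow> d x = 0}"

definition homs :: "'x set \<Rightarrow> ('x \<Rightarrow> nat) \<Rightarrow> ('x \<Rightarrow> nat) \<Rightarrow> ('x \<Rightarrow> 'a::field mat) set" where
  "homs X d e = {f. (\<forall>x\<in>X. f x \<in> carrier_mat (e x) (d x)) \<and> (\<forall>x. x \<notin> X \<longrightarrow> f x = 0\<^sub>m 0 0)}"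

definition idm :: "'x set \<Rightarrow> ('x \<Rightarrow> nat) \<Rightarrow> ('x \<Rightarrow> 'a::field mat)" where
  "idm X d = (\<lambda>x. if x \<in> X then 1\<^sub>m (d x) else 0\<^sub>m 0 0)"

definition cmp :: "'x set \<Rightarrow> ('x \<Rightarrow> 'a::field mat) \<Rightarrow> ('x \<Rightarrow> 'a mat) \<Rightarrow> ('x \<Rightarrow> 'a mat)" where
  "cmp X f g = (\<lambda>x. if x \<in> X then f x * g x else 0\<^sub>m 0 0)"

definition addm :: "'x set \<Rightarrow> ('x \<Rightarrow> 'a::field mat) \<Rightarrow> ('x \<Rightarrow> 'a mat) \<Rightarrow> ('x \<Rightarrow> 'a mat)" where
  "addm X f g = (\<lambda>x. if x \<in> X then f x + g x else 0\<^sub>m 0 0)"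

definition smultm :: "'x set \<Rightarrow> 'a::field \<Rightarrow> ('x \<Rightarrow> 'a mat) \<Rightarrow> ('x \<Rightarrow> 'a mat)" where
  "smultm X c f = (\<lambda>x. if x \<in> X then c \<cdot>\<^sub>m f x else 0\<^sub>m 0 0)"

definition is_iso :: "'x set \<Rightarrow> ('x \<Rightarrow> nat) \<Rightarrow> ('x \<Rightarrow> nat) \<Rightarrow> ('x \<Rightarrow> 'a::field mat) \<Rightarrow> bool" where
  "is_iso X d e f = (f \<in> homs X d e \<and>
     (\<exists>f' \<in> homs X e d. cmp X f' f = idm X d \<and> cmp X f f' = idm X e))"

definition simple_obj :: "'x \<Rightarrow> ('x \<Rightarrow> nat)" where
  "simple_obj x = (\<lambda>z. if z = x then 1 else 0)"

definition hom_dim :: "'x set \<Rightarrow> ('x \<Rightarrow> nat) \<Rightarrow> ('x \<Rightarrow> nat) \<Rightarrow> nat" where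
  "hom_dim X d e = (\<Sum>x\<in>X. d x * e x)"

text \<open>Action of the simple object delta^g of Vec_G^omega: (delta^g |> M)_{g.x} = M_x.\<close>
definition gobj :: "nat \<Rightarrow> 'x set \<Rightarrow> (nat \<Rightarrow> 'x \<Rightarrow> 'x) \<Rightarrow> nat \<Rightarrow> ('x \<Rightarrow> nat) \<Rightarrow> ('x \<Rightarrow> nat)" where
  "gobj n X act g d = (\<lambda>x. if x \<in> X then d (act (ginv n g) x) else 0)"

definition gmor :: "nat \<Rightarrow> 'x set \<Rightarrow> (nat \<Rightarrow> 'x \<Rightarrow> 'x) \<Rightarrow> nat \<Rightarrow> ('x \<Rightarrow> 'a::field mat) \<Rightarrow> ('x \<Rightarrow> 'a mat)" where
  "gmor n X act g f = (\<lambda>x. if x \<in> X then f (act (ginv n g) x) else 0\<^sub>m 0 0)"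

text \<open>Module constraint m_{delta^g,delta^h,d} : (gh)|>d -> g|>(h|>d), acting on the
component of degree x by Psi(g,h,x) (so on a simple object z by Psi(g,h,(gh).z)).\<close>
definition modc :: "nat \<Rightarrow> 'x set \<Rightarrow> (nat \<Rightarrow> 'x \<Rightarrow> 'x) \<Rightarrow> (nat \<Rightarrow> nat \<Rightarrow> 'x \<Rightarrow> 'a::field) \<Rightarrow>
    nat \<Rightarrow> nat \<Rightarrow> ('x \<Rightarrow> nat) \<Rightarrow> ('x \<Rightarrow> 'a mat)" where
  "modc n X act \<Psi> g h d = (\<lambda>x. if x \<in> X
      then \<Psi> g h x \<cdot>\<^sub>m 1\<^sub>m (gobj n X act ((g + h) mod n) d x) else 0\<^sub>m 0 0)"

type_synonym ('x, 'y, 'a) mfun =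
  "(('x \<Rightarrow> nat) \<Rightarrow> ('y \<Rightarrow> nat)) \<times> (('x \<Rightarrow> 'a mat) \<Rightarrow> ('y \<Rightarrow> 'a mat)) \<times>
   (nat \<Rightarrow> ('x \<Rightarrow> nat) \<Rightarrow> ('y \<Rightarrow> 'a mat))"

definition linear_functor :: "'x set \<Rightarrow> 'y set \<Rightarrow> (('x \<Rightarrow> nat) \<Rightarrow> ('y \<Rightarrow> nat)) \<Rightarrow>
    (('x \<Rightarrow> 'a::field mat) \<Rightarrow> ('y \<Rightarrow> 'a mat)) \<Rightarrow> bool" where
  "linear_functor X Y Fo Fm =
    ((\<forall>d\<in>objs X. Fo d \<in> objs Y) \<and>
     (\<forall>d\<in>objs X. \<forall>e\<in>objs X. \<forall>f\<in>homs X d e. Fm f \<in> homs Y (Fo d) (Fo e)) \<and>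
     (\<forall>d\<in>objs X. Fm (idm X d) = idm Y (Fo d)) \<and>
     (\<forall>d\<in>objs X. \<forall>e\<in>objs X. \<forall>k\<in>objs X. \<forall>f\<in>homs X d e. \<forall>f'\<in>homs X e k.
        Fm (cmp X f' f) = cmp Y (Fm f') (Fm f)) \<and>
     (\<forall>d\<in>objs X. \<forall>e\<in>objs X. \<forall>f\<in>homs X d e. \<forall>f'\<in>homs X d e.
        Fm (addm X f f') = addm Y (Fm f) (Fm f')) \<and>
     (\<forall>d\<in>objs X. \<forall>e\<in>objs X. \<forall>f\<in>homs X d e. \<forall>c.
        Fm (smultm X c f) = smultm Y c (Fm f)))"

text \<open>Vec_G^omega-module functor (F,s) : M(X,PsiX) -> M(Y,PsiY); the structure maps
s are given on the simple objects delta^g of Vec_G^omega.\<close>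
definition module_functor :: "nat \<Rightarrow> 'x set \<Rightarrow> (nat \<Rightarrow> 'x \<Rightarrow> 'x) \<Rightarrow> (nat \<Rightarrow> nat \<Rightarrow> 'x \<Rightarrow> 'a::field) \<Rightarrow>
    'y set \<Rightarrow> (nat \<Rightarrow> 'y \<Rightarrow> 'y) \<Rightarrow> (nat \<Rightarrow> nat \<Rightarrow> 'y \<Rightarrow> 'a) \<Rightarrow> ('x, 'y, 'a) mfun \<Rightarrow> bool" where
  "module_functor n X aX PX Y aY PY F = (case F of (Fo, Fm, s) \<Rightarrow>
     linear_functor X Y Fo Fm \<and>
     (\<forall>g<n. \<forall>d\<in>objs X. is_iso Y (Fo (gobj n X aX g d)) (gobj n Y aY g (Fo d)) (s g d)) \<and>
     (\<forall>g<n. \<forall>d\<in>objs X. \<forall>e\<in>objs X. \<forall>f\<in>homs X d e.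
        cmp Y (gmor n Y aY g (Fm f)) (s g d) = cmp Y (s g e) (Fm (gmor n X aX g f))) \<and>
     (\<forall>g<n. \<forall>h<n. \<forall>d\<in>objs X.
        cmp Y (modc n Y aY PY g h (Fo d)) (s ((g + h) mod n) d)
        = cmp Y (cmp Y (gmor n Y aY g (s h d)) (s g (gobj n X aX h d)))
                (Fm (modc n X aX PX g h d))))"

definition mf_mor :: "nat \<Rightarrow> 'x set \<Rightarrow> (nat \<Rightarrow> 'x \<Rightarrow> 'x) \<Rightarrow> 'y set \<Rightarrow> (nat \<Rightarrow> 'y \<Rightarrow> 'y) \<Rightarrow>
    ('x, 'y, 'a::field) mfun \<Rightarrow> ('x, 'y, 'a) mfun \<Rightarrow> (('x \<Rightarrow> nat) \<Rightarrow> ('y \<Rightarrow> 'a mat)) \<Rightarrow> bool" where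
  "mf_mor n X aX Y aY F F' \<eta> = (case F of (Fo, Fm, s) \<Rightarrow> case F' of (Fo', Fm', s') \<Rightarrow>
     (\<forall>d\<in>objs X. \<eta> d \<in> homs Y (Fo d) (Fo' d)) \<and>
     (\<forall>d\<in>objs X. \<forall>e\<in>objs X. \<forall>f\<in>homs X d e. cmp Y (Fm' f) (\<eta> d) = cmp Y (\<eta> e) (Fm f)) \<and>
     (\<forall>g<n. \<forall>d\<in>objs X.
        cmp Y (s' g d) (\<eta> (gobj n X aX g d)) = cmp Y (gmor n Y aY g (\<eta> d)) (s g d)))"

context
  fixes n :: nat and X :: "'x set" and aX :: "nat \<Rightarrow> 'x \<Rightarrow> 'x" and PX :: "nat \<Rightarrow> nat \<Rightarrow> 'x \<Rightarrow> 'a::field"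
    and Y :: "'y set" and aY :: "nat \<Rightarrow> 'y \<Rightarrow> 'y" and PY :: "nat \<Rightarrow> nat \<Rightarrow> 'y \<Rightarrow> 'a"
begin

definition mf_zero :: "('x, 'y, 'a) mfun \<Rightarrow> bool" where
  "mf_zero F = (\<forall>d\<in>objs X. \<forall>y. fst F d y = 0)"

definition mf_mono :: "('x, 'y, 'a) mfun \<Rightarrow> ('x, 'y, 'a) mfun \<Rightarrow> (('x \<Rightarrow> nat) \<Rightarrow> ('y \<Rightarrow> 'a mat)) \<Rightarrow> bool" where
  "mf_mono H F \<iota> = (mf_mor n X aX Y aY H F \<iota> \<and>
     (\<forall>K \<alpha> \<beta>. module_functor n X aX PX Y aY PY K \<longrightarrow>
        mf_mor n X aX Y aY K H \<alpha> \<longrightarrow> mf_mor n X aX Y aY K H \<beta> \<longrightarrow>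
        (\<forall>d\<in>objs X. cmp Y (\<iota> d) (\<alpha> d) = cmp Y (\<iota> d) (\<beta> d)) \<longrightarrow>
        (\<forall>d\<in>objs X. \<alpha> d = \<beta> d)))"

definition mf_iso :: "('x, 'y, 'a) mfun \<Rightarrow> ('x, 'y, 'a) mfun \<Rightarrow> (('x \<Rightarrow> nat) \<Rightarrow> ('y \<Rightarrow> 'a mat)) \<Rightarrow> bool" where
  "mf_iso H F \<iota> = (mf_mor n X aX Y aY H F \<iota> \<and>
     (\<exists>\<theta>. mf_mor n X aX Y aY F H \<theta> \<and>
        (\<forall>d\<in>objs X. cmp Y (\<theta> d) (\<iota> d) = idm Y (fst H d) \<and> cmp Y (\<iota> d) (\<theta> d) = idm Y (fst F d))))"

definition simple_mf :: "('x, 'y, 'a) mfun \<Rightarrow> bool" where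
  "simple_mf F = (module_functor n X aX PX Y aY PY F \<and> \<not> mf_zero F \<and>
     (\<forall>H \<iota>. module_functor n X aX PX Y aY PY H \<longrightarrow> mf_mono H F \<iota> \<longrightarrow> mf_zero H \<or> mf_iso H F \<iota>))"

end

end

theory Submission
  imports Defs "Jordan_Normal_Form.Determinant" "Jordan_Normal_Form.Char_Poly"
begin


lemma mult_mat_vec_index:
  assumes "A \<in> carrier_mat a b" "u \<in> carrier_vec b" "i < a"
  shows "(A *\<^sub>v u) $ i = (\<Sum>l<b. A $$ (i,l) * u $ l)"
  using assms by (auto simp: scalar_prod_def row_def intro!: sum.cong)

lemma kernel_factor_vec:
  fixes M :: "'a::field mat"
  assumes M: "M \<in> carrier_mat k k"
  shows "\<exists>r A B. A \<in> carrier_mat k r \<and> B \<in> carrier_mat r k \<and> B * A = 1\<^sub>m r \<and> M * A = 0\<^sub>m k r \<and>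
     (\<forall>v\<in>carrier_vec k. M *\<^sub>v v = 0\<^sub>v k \<longrightarrow> A *\<^sub>v (B *\<^sub>v v) = v)"
proof -
  have MT: "transpose_mat M \<in> carrier_mat k k" using M by simp
  obtain C where gj: "gauss_jordan_single (transpose_mat M) = C" by auto
  note G = gauss_jordan_single[OF MT gj]
  from G(4) obtain P Q where CP: "C = P * transpose_mat M" and P: "P \<in> carrier_mat k k"
    and Q: "Q \<in> carrier_mat k k" and PQ: "P * Q = 1\<^sub>m k" and QP: "Q * P = 1\<^sub>m k" by blast
  have C: "C \<in> carrier_mat k k" by (rule G(2))
  from G(3) obtain f where pf: "pivot_fun C f k" unfolding row_echelon_form_def using C by auto
  have dC: "dim_row C = k" using C by auto
  note pd = pivot_funD[OF dC pf]
  define r where "r = (if \<exists>i<k. f i = k then LEAST i. i < k \<and> f i = k else k)"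
  have r_le: "r \<le> k" unfolding r_def by (auto intro: Least_le[THEN order.trans] dest: LeastI_ex)
  have lt_r: "f i < k" if "i < r" for i
  proof -
    have ik: "i < k" using that r_le by auto
    show ?thesis
    proof (rule ccontr)
      assume "\<not> f i < k"
      with pd(1)[OF ik] have "f i = k" by auto
      hence "\<exists>i<k. f i = k" using ik by auto
      hence "r \<le> i" unfolding r_def using ik \<open>f i = k\<close> by (auto intro: Least_le)
      thus False using that by auto
    qed
  qed
  have ge_r: "f i = k" if "r \<le> i" "i < k" for i
    using that
  proof (induction i rule: dec_induct)
    case base
    then have ex: "\<exists>i<k. f i = k" using r_le unfolding r_def by (cases "\<exists>i<k. f i = k", auto)
    then show ?case unfolding r_def using LeastI_ex[of "\<lambda>i. i < k \<and> f i = k"] by auto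
  next
    case (step m)
    then have "f (Suc m) > f m \<or> f (Suc m) = k" using pd(3)[of m] by auto
    then show ?case using step pd(1)[of "Suc m"] by auto
  qed
  have zero_row: "C $$ (i, j) = 0" if "r \<le> i" "i < k" "j < k" for i j
    using pd(2)[of i j] ge_r[OF that(1,2)] that by auto
  define A where "A = mat k (k - r) (\<lambda>(i,l). P $$ (r + l, i))"
  define B where "B = mat (k - r) k (\<lambda>(l,j). Q $$ (j, r + l))"
  have A: "A \<in> carrier_mat k (k - r)" unfolding A_def by auto
  have B: "B \<in> carrier_mat (k - r) k" unfolding B_def by auto
  have BA: "B * A = 1\<^sub>m (k - r)"
  proof (rule eq_matI)
    fix l l' assume l: "l < dim_row (1\<^sub>m (k - r))" "l' < dim_col (1\<^sub>m (k - r))"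
    have "(B * A) $$ (l, l') = (\<Sum>j<k. Q $$ (j, r + l) * P $$ (r + l', j))"
      using l A B unfolding A_def B_def
      by (auto simp: scalar_prod_def row_def col_def intro!: sum.cong)
    also have "\<dots> = (P * Q) $$ (r + l', r + l)"
      using l P Q by (auto simp: scalar_prod_def row_def col_def mult.commute intro!: sum.cong)
    also have "\<dots> = 1\<^sub>m (k - r) $$ (l, l')" using l r_le unfolding PQ by auto
    finally show "(B * A) $$ (l, l') = 1\<^sub>m (k - r) $$ (l, l')" .
  qed (insert A B, auto)
  have MA: "M * A = 0\<^sub>m k (k - r)"
  proof (rule eq_matI)
    fix i l assume il: "i < dim_row (0\<^sub>m k (k - r))" "l < dim_col (0\<^sub>m k (k - r))"
    have "(M * A) $$ (i, l) = (\<Sum>j<k. M $$ (i, j) * P $$ (r + l, j))"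
      using il A M unfolding A_def
      by (auto simp: scalar_prod_def row_def col_def intro!: sum.cong)
    also have "\<dots> = C $$ (r + l, i)"
      using il P M unfolding CP by (auto simp: scalar_prod_def row_def col_def mult.commute intro!: sum.cong)
    also have "\<dots> = 0" using il by (intro zero_row, auto)
    finally show "(M * A) $$ (i, l) = 0\<^sub>m k (k - r) $$ (i, l)" using il by auto
  qed (insert A M, auto)
  have ker: "A *\<^sub>v (B *\<^sub>v v) = v" if v: "v \<in> carrier_vec k" and Mv: "M *\<^sub>v v = 0\<^sub>v k" for v
  proof -
    define w where "w = transpose_mat Q *\<^sub>v v"
    have w: "w \<in> carrier_vec k" unfolding w_def using Q v by auto
    have CTw: "transpose_mat C *\<^sub>v w = 0\<^sub>v k"
    proof -
      have "transpose_mat C = M * transpose_mat P" unfolding CP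
        using transpose_mult[OF P MT] by simp
      hence "transpose_mat C *\<^sub>v w = M *\<^sub>v (transpose_mat P *\<^sub>v (transpose_mat Q *\<^sub>v v))"
        unfolding w_def using M P Q v by (simp add: assoc_mult_mat_vec)
      also have "transpose_mat P *\<^sub>v (transpose_mat Q *\<^sub>v v) = (transpose_mat P * transpose_mat Q) *\<^sub>v v"
        using P Q v by (simp add: assoc_mult_mat_vec)
      also have "transpose_mat P * transpose_mat Q = transpose_mat (Q * P)"
        using transpose_mult[OF Q P] by simp
      also have "\<dots> = 1\<^sub>m k" unfolding QP by simp
      finally show ?thesis using v Mv by simp
    qed
    have w0: "w $ i = 0" if "i < r" for i
    proof -
      have ik: "i < k" using that r_le by auto
      have fi: "f i < k" using lt_r[OF that] .
      have "(transpose_mat C *\<^sub>v w) $ f i = (\<Sum>a<k. C $$ (a, f i) * w $ a)"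
        using C w fi by (auto simp: scalar_prod_def row_def intro!: sum.cong)
      also have "\<dots> = (\<Sum>a\<in>{i}. C $$ (a, f i) * w $ a)"
        using pd(5)[OF ik fi] ik by (intro sum.mono_neutral_right, auto)
      also have "\<dots> = w $ i" using pd(4)[OF ik fi] by simp
      finally show ?thesis using CTw fi by simp
    qed
    show ?thesis
    proof (rule eq_vecI)
      fix i assume i: "i < dim_vec v"
      hence ik: "i < k" using v by auto
      have Bv: "(B *\<^sub>v v) $ l = w $ (r + l)" if "l < k - r" for l
        using that B v Q unfolding B_def w_def by (auto simp: scalar_prod_def row_def col_def intro!: sum.cong)
      have "(A *\<^sub>v (B *\<^sub>v v)) $ i = (\<Sum>l<k - r. P $$ (r + l, i) * (B *\<^sub>v v) $ l)"
        using mult_mat_vec_index[OF A _ ik, of "B *\<^sub>v v"] B v ik unfolding A_def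
        by (auto simp del: index_mult_mat_vec intro!: sum.cong)
      also have "\<dots> = (\<Sum>l<k - r. P $$ (r + l, i) * w $ (r + l))"
        using Bv by (intro sum.cong, auto)
      also have "\<dots> = (\<Sum>a\<in>{r..<k}. P $$ (a, i) * w $ a)"
      proof -
        have "{r..<k} = (\<lambda>l. r + l) ` {..<k - r}" using r_le
          by (auto simp: image_iff, rule_tac x="x - r" in bexI, auto)
        thus ?thesis by (simp add: sum.reindex)
      qed
      also have "\<dots> = (\<Sum>a<k. P $$ (a, i) * w $ a)"
        using w0 by (intro sum.mono_neutral_left, auto)
      also have "\<dots> = (transpose_mat P *\<^sub>v w) $ i"
        using ik P w by (auto simp: scalar_prod_def row_def intro!: sum.cong)
      also have "transpose_mat P *\<^sub>v w = (transpose_mat P * transpose_mat Q) *\<^sub>v v"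
        unfolding w_def using P Q v by (simp add: assoc_mult_mat_vec)
      also have "transpose_mat P * transpose_mat Q = 1\<^sub>m k"
        using transpose_mult[OF Q P] QP by simp
      finally show "(A *\<^sub>v (B *\<^sub>v v)) $ i = v $ i" using v ik by simp
    qed (insert A B v, auto)
  qed
  show ?thesis using A B BA MA ker by blast
qed

lemma kernel_factor:
  fixes M :: "'a::field mat"
  assumes M: "M \<in> carrier_mat k k"
  shows "\<exists>r A B. A \<in> carrier_mat k r \<and> B \<in> carrier_mat r k \<and> B * A = 1\<^sub>m r \<and> M * A = 0\<^sub>m k r \<and>
     (\<forall>c N. N \<in> carrier_mat k c \<longrightarrow> M * N = 0\<^sub>m k c \<longrightarrow> A * (B * N) = N)"
proof -
  obtain r A B where A: "A \<in> carrier_mat k r" and B: "B \<in> carrier_mat r k" and BA: "B * A = 1\<^sub>m r"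
    and MA: "M * A = 0\<^sub>m k r" and ker: "\<forall>v\<in>carrier_vec k. M *\<^sub>v v = 0\<^sub>v k \<longrightarrow> A *\<^sub>v (B *\<^sub>v v) = v"
    using kernel_factor_vec[OF M] by blast
  have "A * (B * N) = N" if N: "N \<in> carrier_mat k c" and MN: "M * N = 0\<^sub>m k c" for c N
  proof (rule eq_matI)
    fix i j assume ij: "i < dim_row N" "j < dim_col N"
    have cj: "col N j \<in> carrier_vec k" using N by auto
    have "M *\<^sub>v col N j = col (M * N) j" by (rule col_mult2[symmetric, OF M N], insert ij N, auto)
    also have "\<dots> = 0\<^sub>v k" using MN ij N M by auto
    finally have "A *\<^sub>v (B *\<^sub>v col N j) = col N j" using ker cj by auto
    moreover have "col (A * (B * N)) j = A *\<^sub>v (B *\<^sub>v col N j)"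
      using col_mult2[OF A _ , of "B * N" c j] col_mult2[OF B N, of j] ij A B N by auto
    ultimately have "col (A * (B * N)) j = col N j" by simp
    hence "col (A * (B * N)) j $ i = col N j $ i" by simp
    thus "(A * (B * N)) $$ (i, j) = N $$ (i, j)" using ij A B N by simp
  qed (insert A B N, auto)
  thus ?thesis using A B BA MA by blast
qed


definition msumS :: "nat \<Rightarrow> nat \<Rightarrow> 'b set \<Rightarrow> ('b \<Rightarrow> 'a::comm_ring_1 mat) \<Rightarrow> 'a mat" where
  "msumS r c S f = mat r c (\<lambda>(i,j). \<Sum>a\<in>S. f a $$ (i,j))"

lemma msumS_carrier[simp]: "msumS r c S f \<in> carrier_mat r c"
  and msumS_dims[simp]: "dim_row (msumS r c S f) = r" "dim_col (msumS r c S f) = c"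
  unfolding msumS_def by auto

lemma msumS_index[simp]: "i < r \<Longrightarrow> j < c \<Longrightarrow> msumS r c S f $$ (i,j) = (\<Sum>a\<in>S. f a $$ (i,j))"
  unfolding msumS_def by auto

lemma msumS_cong: "(\<And>a. a \<in> S \<Longrightarrow> f a = g a) \<Longrightarrow> msumS r c S f = msumS r c S g"
  unfolding msumS_def by (auto intro!: sum.cong)

lemma mult_msumS_left:
  assumes A: "A \<in> carrier_mat p r" and f: "\<And>a. a \<in> S \<Longrightarrow> f a \<in> carrier_mat r c"
  shows "A * msumS r c S f = msumS p c S (\<lambda>a. A * f a)"
proof (rule eq_matI)
  fix i j assume ij: "i < dim_row (msumS p c S (\<lambda>a. A * f a))" "j < dim_col (msumS p c S (\<lambda>a. A * f a))"
  have "(A * msumS r c S f) $$ (i,j) = (\<Sum>k<r. A $$ (i,k) * (\<Sum>a\<in>S. f a $$ (k,j)))"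
    using ij A by (auto simp: scalar_prod_def row_def col_def intro!: sum.cong)
  also have "\<dots> = (\<Sum>a\<in>S. \<Sum>k<r. A $$ (i,k) * f a $$ (k,j))"
    by (simp add: sum_distrib_left sum.swap[of _ S])
  also have "\<dots> = (\<Sum>a\<in>S. (A * f a) $$ (i,j))"
  proof (intro sum.cong refl)
    fix a assume "a \<in> S"
    with f[OF this] A ij show "(\<Sum>k<r. A $$ (i,k) * f a $$ (k,j)) = (A * f a) $$ (i,j)"
      by (auto simp: scalar_prod_def row_def col_def intro!: sum.cong)
  qed
  finally show "(A * msumS r c S f) $$ (i,j) = msumS p c S (\<lambda>a. A * f a) $$ (i,j)" using ij by simp
qed (insert A, auto)

lemma mult_msumS_right:
  assumes B: "B \<in> carrier_mat c q" and f: "\<And>a. a \<in> S \<Longrightarrow> f a \<in> carrier_mat r c"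
  shows "msumS r c S f * B = msumS r q S (\<lambda>a. f a * B)"
proof (rule eq_matI)
  fix i j assume ij: "i < dim_row (msumS r q S (\<lambda>a. f a * B))" "j < dim_col (msumS r q S (\<lambda>a. f a * B))"
  have "(msumS r c S f * B) $$ (i,j) = (\<Sum>k<c. (\<Sum>a\<in>S. f a $$ (i,k)) * B $$ (k,j))"
    using ij B by (auto simp: scalar_prod_def row_def col_def intro!: sum.cong)
  also have "\<dots> = (\<Sum>a\<in>S. \<Sum>k<c. f a $$ (i,k) * B $$ (k,j))"
    by (simp add: sum_distrib_right sum.swap[of _ S])
  also have "\<dots> = (\<Sum>a\<in>S. (f a * B) $$ (i,j))"
  proof (intro sum.cong refl)
    fix a assume "a \<in> S"
    with f[OF this] B ij show "(\<Sum>k<c. f a $$ (i,k) * B $$ (k,j)) = (f a * B) $$ (i,j)"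
      by (auto simp: scalar_prod_def row_def col_def intro!: sum.cong)
  qed
  finally show "(msumS r c S f * B) $$ (i,j) = msumS r q S (\<lambda>a. f a * B) $$ (i,j)" using ij by simp
qed (insert B, auto)

lemma msumS_Sigma:
  assumes "finite A" "\<forall>a\<in>A. finite (B a)"
  shows "msumS r c (Sigma A B) f = msumS r c A (\<lambda>a. msumS r c (B a) (\<lambda>b. f (a,b)))"
proof -
  have *: "(\<Sum>a\<in>A. \<Sum>b\<in>B a. g (a,b)) = (\<Sum>p\<in>Sigma A B. g p)" for g
    using sum.Sigma[OF assms, of "\<lambda>a b. g (a,b)"] by (simp add: split_def)
  show ?thesis unfolding msumS_def
    by (rule eq_matI, simp_all, subst *[of "\<lambda>p. f p $$ _", symmetric], simp)
qed

lemma msumS_swap: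
  "msumS r c A (\<lambda>a. msumS r c B (f a)) = msumS r c B (\<lambda>b. msumS r c A (\<lambda>a. f a b))"
  unfolding msumS_def by (auto intro!: eq_matI simp: sum.swap[of _ A])

lemma msumS_reindex: "inj_on h S \<Longrightarrow> msumS r c (h ` S) f = msumS r c S (f \<circ> h)"
  unfolding msumS_def by (auto intro!: eq_matI simp: sum.reindex)

lemma msumS_single: "f a \<in> carrier_mat r c \<Longrightarrow> msumS r c {a} f = f a"
  unfolding msumS_def by (auto intro!: eq_matI)

lemma msumS_empty: "msumS r c {} f = 0\<^sub>m r c"
  unfolding msumS_def by (auto intro!: eq_matI)

lemma msumS_zero: "(\<And>a. a \<in> S \<Longrightarrow> f a = 0\<^sub>m r c) \<Longrightarrow> msumS r c S f = 0\<^sub>m r c"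
  unfolding msumS_def by (auto intro!: eq_matI)

lemma msumS_insert: "finite S \<Longrightarrow> a \<notin> S \<Longrightarrow> f a \<in> carrier_mat r c \<Longrightarrow>
    msumS r c (insert a S) f = f a + msumS r c S f"
  unfolding msumS_def by (auto intro!: eq_matI)

lemma msumS_smult: assumes f: "\<And>a. a \<in> S \<Longrightarrow> f a \<in> carrier_mat r c"
  shows "k \<cdot>\<^sub>m msumS r c S f = msumS r c S (\<lambda>a. k \<cdot>\<^sub>m f a)"
proof (rule eq_matI)
  fix i j assume ij: "i < dim_row (msumS r c S (\<lambda>a. k \<cdot>\<^sub>m f a))" "j < dim_col (msumS r c S (\<lambda>a. k \<cdot>\<^sub>m f a))"
  have "(\<Sum>a\<in>S. k * f a $$ (i, j)) = (\<Sum>a\<in>S. (k \<cdot>\<^sub>m f a) $$ (i, j))"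
  proof (rule sum.cong[OF refl])
    fix a assume "a \<in> S"
    from f[OF this] ij show "k * f a $$ (i, j) = (k \<cdot>\<^sub>m f a) $$ (i, j)" by auto
  qed
  thus "(k \<cdot>\<^sub>m msumS r c S f) $$ (i, j) = msumS r c S (\<lambda>a. k \<cdot>\<^sub>m f a) $$ (i, j)"
    using ij by (simp add: sum_distrib_left)
qed auto

lemma msumS_add: assumes f: "\<And>a. a \<in> S \<Longrightarrow> f a \<in> carrier_mat r c" and g: "\<And>a. a \<in> S \<Longrightarrow> g a \<in> carrier_mat r c"
  shows "msumS r c S f + msumS r c S g = msumS r c S (\<lambda>a. f a + g a)"
proof (rule eq_matI)
  fix i j assume ij: "i < dim_row (msumS r c S (\<lambda>a. f a + g a))" "j < dim_col (msumS r c S (\<lambda>a. f a + g a))"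
  have "(\<Sum>a\<in>S. f a $$ (i, j)) + (\<Sum>a\<in>S. g a $$ (i, j)) = (\<Sum>a\<in>S. (f a + g a) $$ (i, j))"
    unfolding sum.distrib[symmetric]
  proof (rule sum.cong[OF refl])
    fix a assume "a \<in> S"
    from f[OF this] g[OF this] ij show "f a $$ (i, j) + g a $$ (i, j) = (f a + g a) $$ (i, j)" by auto
  qed
  thus "(msumS r c S f + msumS r c S g) $$ (i, j) = msumS r c S (\<lambda>a. f a + g a) $$ (i, j)"
    using ij by simp
qed auto

section \<open>Generic facts on the graded categories\<close>

definition zhom :: "'x set \<Rightarrow> ('x \<Rightarrow> nat) \<Rightarrow> ('x \<Rightarrow> nat) \<Rightarrow> ('x \<Rightarrow> 'a::field mat)" where
  "zhom X d e = (\<lambda>x. if x \<in> X then 0\<^sub>m (e x) (d x) else 0\<^sub>m 0 0)"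

definition hsumS :: "'x set \<Rightarrow> ('x \<Rightarrow> nat) \<Rightarrow> ('x \<Rightarrow> nat) \<Rightarrow> 'b set \<Rightarrow> ('b \<Rightarrow> 'x \<Rightarrow> 'a::field mat) \<Rightarrow> ('x \<Rightarrow> 'a mat)" where
  "hsumS X d e S f = (\<lambda>x. if x \<in> X then msumS (e x) (d x) S (\<lambda>a. f a x) else 0\<^sub>m 0 0)"

lemma homsD: "f \<in> homs X d e \<Longrightarrow> x \<in> X \<Longrightarrow> f x \<in> carrier_mat (e x) (d x)"
  and homsD2: "f \<in> homs X d e \<Longrightarrow> x \<notin> X \<Longrightarrow> f x = 0\<^sub>m 0 0"
  unfolding homs_def by auto

lemma homsI: "(\<And>x. x \<in> X \<Longrightarrow> f x \<in> carrier_mat (e x) (d x)) \<Longrightarrow> (\<And>x. x \<notin> X \<Longrightarrow> f x = 0\<^sub>m 0 0) \<Longrightarrow> f \<in> homs X d e"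
  unfolding homs_def by blast

lemma homs_ext: assumes "f \<in> homs X d e" "g \<in> homs X d' e'" "\<And>x. x \<in> X \<Longrightarrow> f x = g x" shows "f = g"
proof (rule ext)
  fix x show "f x = g x" using assms unfolding homs_def by (cases "x \<in> X", auto)
qed

lemma zhom_homs[simp]: "zhom X d e \<in> homs X d e"
  unfolding zhom_def homs_def by auto

lemma idm_homs[simp]: "idm X d \<in> homs X d d"
  unfolding idm_def homs_def by auto

lemma hsumS_homs[simp]: "hsumS X d e S f \<in> homs X d e"
  unfolding hsumS_def homs_def by auto

lemma cmp_homs: "f \<in> homs X d e \<Longrightarrow> f' \<in> homs X e k \<Longrightarrow> cmp X f' f \<in> homs X d k"
  by (rule homsI, unfold cmp_def, auto dest!: homsD)

lemma addm_homs: "f \<in> homs X d e \<Longrightarrow> f' \<in> homs X d e \<Longrightarrow> addm X f f' \<in> homs X d e"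
  by (rule homsI, unfold addm_def, auto dest!: homsD)

lemma smultm_homs: "f \<in> homs X d e \<Longrightarrow> smultm X c f \<in> homs X d e"
  by (rule homsI, unfold smultm_def, auto dest!: homsD)

lemma smult_zero_mat: "(A :: 'a::comm_ring_1 mat) \<in> carrier_mat r c \<Longrightarrow> 0 \<cdot>\<^sub>m A = 0\<^sub>m r c"
  by (rule eq_matI, auto)

lemma smultm_zero: assumes "f \<in> homs X d e" shows "smultm X 0 f = zhom X d e"
proof (rule ext)
  fix x show "smultm X 0 f x = zhom X d e x"
    using homsD[OF assms, of x] unfolding smultm_def zhom_def by (cases "x \<in> X", auto simp: smult_zero_mat)
qed

lemma hsumS_empty: "hsumS X d e {} f = zhom X d e"
  unfolding hsumS_def zhom_def by (auto intro!: ext simp: msumS_empty)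

lemma hsumS_insert: "finite S \<Longrightarrow> a \<notin> S \<Longrightarrow> f a \<in> homs X d e \<Longrightarrow>
    hsumS X d e (insert a S) f = addm X (f a) (hsumS X d e S f)"
  unfolding hsumS_def addm_def by (intro ext, auto intro!: msumS_insert dest: homsD)

lemma objs_zero: "d \<in> objs X \<Longrightarrow> x \<notin> X \<Longrightarrow> d x = 0"
  unfolding objs_def by auto

context
  fixes X :: "'x set" and Y :: "'y set" and Fo :: "('x \<Rightarrow> nat) \<Rightarrow> ('y \<Rightarrow> nat)"
    and Fm :: "('x \<Rightarrow> 'a::field mat) \<Rightarrow> ('y \<Rightarrow> 'a mat)"
  assumes LF: "linear_functor X Y Fo Fm"
begin

lemmas LFc = LF[unfolded linear_functor_def]

lemma LF_obj: "d \<in> objs X \<Longrightarrow> Fo d \<in> objs Y"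
  using LFc by (elim conjE, blast)

lemma LF_hom: "d \<in> objs X \<Longrightarrow> e \<in> objs X \<Longrightarrow> f \<in> homs X d e \<Longrightarrow> Fm f \<in> homs Y (Fo d) (Fo e)"
  using LFc[THEN conjunct2] by (elim conjE, blast)

lemma LF_idm: "d \<in> objs X \<Longrightarrow> Fm (idm X d) = idm Y (Fo d)"
  using LFc[THEN conjunct2] by (elim conjE, blast)

lemma LF_cmp: "d \<in> objs X \<Longrightarrow> e \<in> objs X \<Longrightarrow> k \<in> objs X \<Longrightarrow> f \<in> homs X d e \<Longrightarrow> f' \<in> homs X e k \<Longrightarrow>
   Fm (cmp X f' f) = cmp Y (Fm f') (Fm f)"
  using LFc[THEN conjunct2] by (elim conjE, blast)

lemma LF_addm: "d \<in> objs X \<Longrightarrow> e \<in> objs X \<Longrightarrow> f \<in> homs X d e \<Longrightarrow> f' \<in> homs X d e \<Longrightarrow>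
   Fm (addm X f f') = addm Y (Fm f) (Fm f')"
  using LFc[THEN conjunct2] by (elim conjE, blast)

lemma LF_smultm: "d \<in> objs X \<Longrightarrow> e \<in> objs X \<Longrightarrow> f \<in> homs X d e \<Longrightarrow>
   Fm (smultm X c f) = smultm Y c (Fm f)"
  using LFc[THEN conjunct2] by (elim conjE, blast)

lemma LF_zhom: "d \<in> objs X \<Longrightarrow> e \<in> objs X \<Longrightarrow> Fm (zhom X d e) = zhom Y (Fo d) (Fo e)"
proof -
  assume d: "d \<in> objs X" and e: "e \<in> objs X"
  have "Fm (zhom X d e) = Fm (smultm X 0 (zhom X d e))" by (simp add: smultm_zero[OF zhom_homs])
  also have "\<dots> = smultm Y 0 (Fm (zhom X d e))" using LF_smultm[OF d e zhom_homs] .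
  also have "\<dots> = zhom Y (Fo d) (Fo e)" using LF_hom[OF d e zhom_homs] by (rule smultm_zero)
  finally show ?thesis .
qed

lemma LF_hsumS:
  assumes S: "finite S" and d: "d \<in> objs X" and e: "e \<in> objs X" and f: "\<And>a. a \<in> S \<Longrightarrow> f a \<in> homs X d e"
  shows "Fm (hsumS X d e S f) = hsumS Y (Fo d) (Fo e) S (\<lambda>a. Fm (f a))"
  using S f
proof (induction S rule: finite_induct)
  case empty
  then show ?case by (simp add: hsumS_empty LF_zhom[OF d e])
next
  case (insert a S)
  have "Fm (hsumS X d e (insert a S) f) = Fm (addm X (f a) (hsumS X d e S f))"
    using insert.hyps insert.prems by (subst hsumS_insert, auto)
  also have "\<dots> = addm Y (Fm (f a)) (Fm (hsumS X d e S f))"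
    using insert.prems by (intro LF_addm[OF d e], auto)
  also have "\<dots> = addm Y (Fm (f a)) (hsumS Y (Fo d) (Fo e) S (\<lambda>a. Fm (f a)))"
  proof -
    have "Fm (hsumS X d e S f) = hsumS Y (Fo d) (Fo e) S (\<lambda>a. Fm (f a))"
      by (rule insert.IH, rule insert.prems, simp)
    thus ?thesis by (simp only:)
  qed
  also have "\<dots> = hsumS Y (Fo d) (Fo e) (insert a S) (\<lambda>a. Fm (f a))"
  proof -
    have fa: "f a \<in> homs X d e" using insert.prems by simp
    have "Fm (f a) \<in> homs Y (Fo d) (Fo e)" using LF_hom[OF d e fa] .
    thus ?thesis using hsumS_insert[OF insert.hyps(1,2), of "\<lambda>a. Fm (f a)" Y "Fo d" "Fo e"] by simp
  qed
  finally show ?case .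
qed

end


section \<open>Group actions\<close>

lemma ginv_lt: "1 \<le> n \<Longrightarrow> ginv n g < n"
  unfolding ginv_def by auto

lemma ginv_add_mod: "1 \<le> n \<Longrightarrow> g < n \<Longrightarrow> (ginv n g + g) mod n = 0"
  unfolding ginv_def by (cases "g = 0") (auto simp: mod_add_left_eq)

lemma ginv_add_mod2: "1 \<le> n \<Longrightarrow> g < n \<Longrightarrow> (g + ginv n g) mod n = 0"
  using ginv_add_mod by (simp add: add.commute)

context
  fixes n :: nat and X :: "'x set" and act :: "nat \<Rightarrow> 'x \<Rightarrow> 'x"
  assumes n1: "1 \<le> n" and GS: "is_Gset n X act"
begin

lemma act_in: "g < n \<Longrightarrow> x \<in> X \<Longrightarrow> act g x \<in> X"
  using GS unfolding is_Gset_def by auto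

lemma act_0: "x \<in> X \<Longrightarrow> act 0 x = x"
  using GS unfolding is_Gset_def by auto

lemma act_comp: "g < n \<Longrightarrow> h < n \<Longrightarrow> x \<in> X \<Longrightarrow> act ((g + h) mod n) x = act g (act h x)"
  using GS unfolding is_Gset_def by auto

lemma act_inv1: "g < n \<Longrightarrow> x \<in> X \<Longrightarrow> act (ginv n g) (act g x) = x"
  using act_comp[of "ginv n g" g x] ginv_lt[OF n1] ginv_add_mod[OF n1] act_0 by auto

lemma act_inv2: "g < n \<Longrightarrow> x \<in> X \<Longrightarrow> act g (act (ginv n g) x) = x"
  using act_comp[of g "ginv n g" x] ginv_lt[OF n1] ginv_add_mod2[OF n1] act_0 by auto

lemma act_inv_in: "g < n \<Longrightarrow> x \<in> X \<Longrightarrow> act (ginv n g) x \<in> X"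
  using act_in ginv_lt[OF n1] by auto

lemma act_inj: "g < n \<Longrightarrow> x \<in> X \<Longrightarrow> z \<in> X \<Longrightarrow> act g x = act g z \<Longrightarrow> x = z"
  by (metis act_inv1)

lemma act_ginv_comp: "g < n \<Longrightarrow> h < n \<Longrightarrow> x \<in> X \<Longrightarrow>
    act (ginv n ((g + h) mod n)) x = act (ginv n h) (act (ginv n g) x)"
proof -
  assume g: "g < n" and h: "h < n" and x: "x \<in> X"
  let ?z = "act (ginv n h) (act (ginv n g) x)"
  have z: "?z \<in> X" using act_inv_in g h x by auto
  have gh: "(g + h) mod n < n" using n1 by auto
  have "act ((g + h) mod n) ?z = x"
    using act_comp[OF g h z] act_inv2 act_inv_in g h x by auto
  hence "act (ginv n ((g + h) mod n)) (act ((g + h) mod n) ?z) = act (ginv n ((g + h) mod n)) x" by simp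
  thus ?thesis using act_inv1[OF gh z] by simp
qed

lemma gobj_objs[simp]: "gobj n X act g d \<in> objs X"
  unfolding gobj_def objs_def by auto

lemma gobj_at: "x \<in> X \<Longrightarrow> gobj n X act g d x = d (act (ginv n g) x)"
  unfolding gobj_def by auto

lemma gmor_at: "x \<in> X \<Longrightarrow> gmor n X act g f x = f (act (ginv n g) x)"
  unfolding gmor_def by auto

lemma gmor_out: "x \<notin> X \<Longrightarrow> gmor n X act g f x = 0\<^sub>m 0 0"
  unfolding gmor_def by auto

lemma gobj_gobj: "d \<in> objs X \<Longrightarrow> g < n \<Longrightarrow> h < n \<Longrightarrow>
    gobj n X act g (gobj n X act h d) = gobj n X act ((g + h) mod n) d"
  unfolding gobj_def by (auto intro!: ext simp: act_ginv_comp act_inv_in)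

lemma gmor_homs: "g < n \<Longrightarrow> f \<in> homs X d e \<Longrightarrow> gmor n X act g f \<in> homs X (gobj n X act g d) (gobj n X act g e)"
  unfolding homs_def gmor_def gobj_def using act_inv_in by auto

lemma gobj_simple: "g < n \<Longrightarrow> x \<in> X \<Longrightarrow> gobj n X act g (simple_obj x) = simple_obj (act g x)"
  unfolding gobj_def simple_obj_def
  by (intro ext, auto simp: act_inv1 act_inv2 act_in)

end


definition KP :: "'a::field mat \<Rightarrow> nat \<Rightarrow> nat \<times> 'a mat \<times> 'a mat \<Rightarrow> bool" where
  "KP M k t = (case t of (r, A, B) \<Rightarrow> A \<in> carrier_mat k r \<and> B \<in> carrier_mat r k \<and> B * A = 1\<^sub>m r \<and>
      M * A = 0\<^sub>m k r \<and> (\<forall>c N. N \<in> carrier_mat k c \<longrightarrow> M * N = 0\<^sub>m k c \<longrightarrow> A * (B * N) = N))"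

lemma KP_some: assumes "M \<in> carrier_mat k k" shows "KP M k (SOME t. KP M k t)"
proof -
  from kernel_factor[OF assms] obtain r A B where "KP M k (r, A, B)" unfolding KP_def by blast
  thus ?thesis by (rule someI)
qed

lemma cmp_at: "y \<in> Y \<Longrightarrow> cmp Y f g y = f y * g y"
  unfolding cmp_def by simp

lemma idm_at: "y \<in> Y \<Longrightarrow> idm Y d y = 1\<^sub>m (d y)"
  unfolding idm_def by simp

lemma addm_at: "y \<in> Y \<Longrightarrow> addm Y f g y = f y + g y"
  unfolding addm_def by simp

lemma smultm_at: "y \<in> Y \<Longrightarrow> smultm Y c f y = c \<cdot>\<^sub>m f y"
  unfolding smultm_def by simp

lemma objs_homs_carrier: "d \<in> objs Y \<Longrightarrow> e \<in> objs Y \<Longrightarrow> f \<in> homs Y d e \<Longrightarrow> f y \<in> carrier_mat (e y) (d y)"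
  unfolding objs_def homs_def by (cases "y \<in> Y", auto)

locale MFS =
  fixes n :: nat and X :: "'x set" and aX :: "nat \<Rightarrow> 'x \<Rightarrow> 'x" and PX :: "nat \<Rightarrow> nat \<Rightarrow> 'x \<Rightarrow> 'a::field"
    and Y :: "'y set" and aY :: "nat \<Rightarrow> 'y \<Rightarrow> 'y" and PY :: "nat \<Rightarrow> nat \<Rightarrow> 'y \<Rightarrow> 'a"
    and Fo :: "('x \<Rightarrow> nat) \<Rightarrow> ('y \<Rightarrow> nat)" and Fm :: "('x \<Rightarrow> 'a mat) \<Rightarrow> ('y \<Rightarrow> 'a mat)"
    and s :: "nat \<Rightarrow> ('x \<Rightarrow> nat) \<Rightarrow> ('y \<Rightarrow> 'a mat)"
  assumes n1: "1 \<le> n" and GX: "is_Gset n X aX" and GY: "is_Gset n Y aY"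
    and MF: "module_functor n X aX PX Y aY PY (Fo, Fm, s)"

context MFS
begin

lemma MFc: "linear_functor X Y Fo Fm \<and>
     (\<forall>g<n. \<forall>d\<in>objs X. is_iso Y (Fo (gobj n X aX g d)) (gobj n Y aY g (Fo d)) (s g d)) \<and>
     (\<forall>g<n. \<forall>d\<in>objs X. \<forall>e\<in>objs X. \<forall>f\<in>homs X d e.
        cmp Y (gmor n Y aY g (Fm f)) (s g d) = cmp Y (s g e) (Fm (gmor n X aX g f))) \<and>
     (\<forall>g<n. \<forall>h<n. \<forall>d\<in>objs X.
        cmp Y (modc n Y aY PY g h (Fo d)) (s ((g + h) mod n) d)
        = cmp Y (cmp Y (gmor n Y aY g (s h d)) (s g (gobj n X aX h d)))
                (Fm (modc n X aX PX g h d)))"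
  using MF unfolding module_functor_def by simp

lemma LFF: "linear_functor X Y Fo Fm" using MFc by blast

lemma s_iso: "g < n \<Longrightarrow> d \<in> objs X \<Longrightarrow> is_iso Y (Fo (gobj n X aX g d)) (gobj n Y aY g (Fo d)) (s g d)"
  using MFc by blast

lemma s_nat: "g < n \<Longrightarrow> d \<in> objs X \<Longrightarrow> e \<in> objs X \<Longrightarrow> f \<in> homs X d e \<Longrightarrow>
   cmp Y (gmor n Y aY g (Fm f)) (s g d) = cmp Y (s g e) (Fm (gmor n X aX g f))"
  using MFc by blast

lemma s_mod: "g < n \<Longrightarrow> h < n \<Longrightarrow> d \<in> objs X \<Longrightarrow>
        cmp Y (modc n Y aY PY g h (Fo d)) (s ((g + h) mod n) d)
        = cmp Y (cmp Y (gmor n Y aY g (s h d)) (s g (gobj n X aX h d)))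
                (Fm (modc n X aX PX g h d))"
  using MFc by blast

lemmas F_obj = LF_obj[OF LFF] and F_hom = LF_hom[OF LFF] and F_idm = LF_idm[OF LFF]
  and F_cmp = LF_cmp[OF LFF] and F_addm = LF_addm[OF LFF] and F_smultm = LF_smultm[OF LFF]
  and F_zhom = LF_zhom[OF LFF] and F_hsumS = LF_hsumS[OF LFF]

definition sinv :: "nat \<Rightarrow> ('x \<Rightarrow> nat) \<Rightarrow> ('y \<Rightarrow> 'a mat)" where
  "sinv g d = (SOME f'. f' \<in> homs Y (gobj n Y aY g (Fo d)) (Fo (gobj n X aX g d)) \<and>
       cmp Y f' (s g d) = idm Y (Fo (gobj n X aX g d)) \<and> cmp Y (s g d) f' = idm Y (gobj n Y aY g (Fo d)))"

lemma s_props: assumes g: "g < n" and d: "d \<in> objs X"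
  shows "s g d \<in> homs Y (Fo (gobj n X aX g d)) (gobj n Y aY g (Fo d))"
    "sinv g d \<in> homs Y (gobj n Y aY g (Fo d)) (Fo (gobj n X aX g d))"
    "cmp Y (sinv g d) (s g d) = idm Y (Fo (gobj n X aX g d))"
    "cmp Y (s g d) (sinv g d) = idm Y (gobj n Y aY g (Fo d))"
proof -
  note iso = s_iso[OF g d, unfolded is_iso_def]
  show "s g d \<in> homs Y (Fo (gobj n X aX g d)) (gobj n Y aY g (Fo d))" using iso by blast
  from iso have "\<exists>f'. f' \<in> homs Y (gobj n Y aY g (Fo d)) (Fo (gobj n X aX g d)) \<and>
       cmp Y f' (s g d) = idm Y (Fo (gobj n X aX g d)) \<and> cmp Y (s g d) f' = idm Y (gobj n Y aY g (Fo d))"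
    by blast
  from someI_ex[OF this] show "sinv g d \<in> homs Y (gobj n Y aY g (Fo d)) (Fo (gobj n X aX g d))"
    "cmp Y (sinv g d) (s g d) = idm Y (Fo (gobj n X aX g d))"
    "cmp Y (s g d) (sinv g d) = idm Y (gobj n Y aY g (Fo d))"
    unfolding sinv_def by blast+
qed

lemma s_at: assumes g: "g < n" and d: "d \<in> objs X" and y: "y \<in> Y"
  shows "s g d y \<in> carrier_mat (Fo d (aY (ginv n g) y)) (Fo (gobj n X aX g d) y)"
    "sinv g d y \<in> carrier_mat (Fo (gobj n X aX g d) y) (Fo d (aY (ginv n g) y))"
    "sinv g d y * s g d y = 1\<^sub>m (Fo (gobj n X aX g d) y)"
    "s g d y * sinv g d y = 1\<^sub>m (Fo d (aY (ginv n g) y))"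
  using homsD[OF s_props(1)[OF g d] y] homsD[OF s_props(2)[OF g d] y]
    s_props(3,4)[OF g d] y
  by (auto simp: gobj_at[OF n1 GY] cmp_at idm_at dest: fun_cong[of _ _ y])

end


lemma assoc_dim: "dim_col A = dim_row B \<Longrightarrow> dim_col B = dim_row C \<Longrightarrow> A * B * C = A * (B * C)"
  by (rule assoc_mult_mat[of A "dim_row A" "dim_col A" B "dim_col B" C "dim_col C"], auto)

lemmas cD = carrier_matD(1,2)

lemma mult_add_dim: "dim_col A = dim_row B \<Longrightarrow> dim_row B = dim_row C \<Longrightarrow> dim_col B = dim_col C \<Longrightarrow>
   A * (B + C) = A * B + A * C"
  by (rule mult_add_distrib_mat[of A "dim_row A" "dim_col A" B "dim_col B" C], auto)

lemma add_mult_dim: "dim_row A = dim_row B \<Longrightarrow> dim_col A = dim_col B \<Longrightarrow> dim_col A = dim_row C \<Longrightarrow>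
   (A + B) * C = A * C + B * C"
  by (rule add_mult_distrib_mat[of A "dim_row A" "dim_col A" B C "dim_col C"], auto)

lemma mult_smult_dim: "dim_col A = dim_row B \<Longrightarrow> A * (k \<cdot>\<^sub>m B) = (k::'a::comm_ring_1) \<cdot>\<^sub>m (A * B)"
  by (rule mult_smult_distrib[of A "dim_row A" "dim_col A" B "dim_col B"], auto)

lemma smult_mult_dim: "dim_col A = dim_row B \<Longrightarrow> (k \<cdot>\<^sub>m A) * B = (k::'a::comm_ring_1) \<cdot>\<^sub>m (A * B)"
  by (rule mult_smult_assoc_mat[of A "dim_row A" "dim_col A" B "dim_col B"], auto)

lemma mult_zero_dim0: "A \<in> carrier_mat a 0 \<Longrightarrow> B \<in> carrier_mat 0 c \<Longrightarrow> A * B = 0\<^sub>m a c"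
  by (rule eq_matI, auto simp: scalar_prod_def)

definition domf :: "'x set \<Rightarrow> ('x \<Rightarrow> 'a mat) \<Rightarrow> ('x \<Rightarrow> nat)" where
  "domf X f = (\<lambda>x. if x \<in> X then dim_col (f x) else 0)"
definition codf :: "'x set \<Rightarrow> ('x \<Rightarrow> 'a mat) \<Rightarrow> ('x \<Rightarrow> nat)" where
  "codf X f = (\<lambda>x. if x \<in> X then dim_row (f x) else 0)"

lemma domf_codf: "f \<in> homs X d e \<Longrightarrow> d \<in> objs X \<Longrightarrow> e \<in> objs X \<Longrightarrow> domf X f = d \<and> codf X f = e"
proof -
  assume f: "f \<in> homs X d e" and d: "d \<in> objs X" and e: "e \<in> objs X"
  have "domf X f x = d x \<and> codf X f x = e x" for x
  proof (cases "x \<in> X")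
    case True
    with homsD[OF f True] show ?thesis unfolding domf_def codf_def by auto
  next
    case False
    with objs_zero[OF d False] objs_zero[OF e False] show ?thesis unfolding domf_def codf_def by auto
  qed
  thus ?thesis by auto
qed

locale MFT = MFS n X aX PX Y aY PY Fo Fm s
  for n :: nat and X :: "'x set" and aX :: "nat \<Rightarrow> 'x \<Rightarrow> 'x" and PX :: "nat \<Rightarrow> nat \<Rightarrow> 'x \<Rightarrow> 'a::field"
    and Y :: "'y set" and aY :: "nat \<Rightarrow> 'y \<Rightarrow> 'y" and PY :: "nat \<Rightarrow> nat \<Rightarrow> 'y \<Rightarrow> 'a"
    and Fo :: "('x \<Rightarrow> nat) \<Rightarrow> ('y \<Rightarrow> nat)" and Fm :: "('x \<Rightarrow> 'a mat) \<Rightarrow> ('y \<Rightarrow> 'a mat)"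
    and s :: "nat \<Rightarrow> ('x \<Rightarrow> nat) \<Rightarrow> ('y \<Rightarrow> 'a mat)" +
  fixes \<theta> :: "('x \<Rightarrow> nat) \<Rightarrow> ('y \<Rightarrow> 'a mat)"
  assumes TH: "mf_mor n X aX Y aY (Fo, Fm, s) (Fo, Fm, s) \<theta>"
begin

lemma THc: "(\<forall>d\<in>objs X. \<theta> d \<in> homs Y (Fo d) (Fo d)) \<and>
     (\<forall>d\<in>objs X. \<forall>e\<in>objs X. \<forall>f\<in>homs X d e. cmp Y (Fm f) (\<theta> d) = cmp Y (\<theta> e) (Fm f)) \<and>
     (\<forall>g<n. \<forall>d\<in>objs X. cmp Y (s g d) (\<theta> (gobj n X aX g d)) = cmp Y (gmor n Y aY g (\<theta> d)) (s g d))"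
  using TH unfolding mf_mor_def prod.case .

lemma th_hom: "d \<in> objs X \<Longrightarrow> \<theta> d \<in> homs Y (Fo d) (Fo d)"
  by (rule THc[THEN conjunct1, rule_format])

lemma th_car: "d \<in> objs X \<Longrightarrow> \<theta> d y \<in> carrier_mat (Fo d y) (Fo d y)"
  using objs_homs_carrier[OF F_obj F_obj th_hom] by blast

lemma th_nat: "d \<in> objs X \<Longrightarrow> e \<in> objs X \<Longrightarrow> f \<in> homs X d e \<Longrightarrow> y \<in> Y \<Longrightarrow>
   Fm f y * \<theta> d y = \<theta> e y * Fm f y"
proof -
  assume d: "d \<in> objs X" and e: "e \<in> objs X" and f: "f \<in> homs X d e" and y: "y \<in> Y"
  have "cmp Y (Fm f) (\<theta> d) = cmp Y (\<theta> e) (Fm f)" by (rule THc[THEN conjunct2, THEN conjunct1, rule_format, OF d e f])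
  from fun_cong[OF this, of y] y show ?thesis by (simp add: cmp_at)
qed

lemma th_s: "g < n \<Longrightarrow> d \<in> objs X \<Longrightarrow> y \<in> Y \<Longrightarrow>
   s g d y * \<theta> (gobj n X aX g d) y = \<theta> d (aY (ginv n g) y) * s g d y"
proof -
  assume g: "g < n" and d: "d \<in> objs X" and y: "y \<in> Y"
  have "cmp Y (s g d) (\<theta> (gobj n X aX g d)) = cmp Y (gmor n Y aY g (\<theta> d)) (s g d)"
    by (rule THc[THEN conjunct2, THEN conjunct2, rule_format, OF g d])
  from fun_cong[OF this, of y] show ?thesis using y by (simp add: cmp_at gmor_at[OF n1 GY])
qed

lemma Fm_car: "d \<in> objs X \<Longrightarrow> e \<in> objs X \<Longrightarrow> f \<in> homs X d e \<Longrightarrow> Fm f y \<in> carrier_mat (Fo e y) (Fo d y)"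
  by (rule objs_homs_carrier[OF F_obj F_obj F_hom])

lemma aYi: "g < n \<Longrightarrow> y \<in> Y \<Longrightarrow> aY (ginv n g) y \<in> Y"
  by (rule act_inv_in[OF n1 GY])

definition kt :: "('x \<Rightarrow> nat) \<Rightarrow> 'y \<Rightarrow> nat \<times> 'a mat \<times> 'a mat" where
  "kt d y = (SOME t. KP (\<theta> d y) (Fo d y) t)"
definition "kr d y = fst (kt d y)"
definition "kA d y = fst (snd (kt d y))"
definition "kB d y = snd (snd (kt d y))"

definition inK :: "('x \<Rightarrow> nat) \<Rightarrow> 'y \<Rightarrow> 'a mat \<Rightarrow> bool" where
  "inK d y N = (N \<in> carrier_mat (Fo d y) (dim_col N) \<and> \<theta> d y * N = 0\<^sub>m (Fo d y) (dim_col N))"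

lemma kprops: assumes d: "d \<in> objs X"
  shows "kA d y \<in> carrier_mat (Fo d y) (kr d y)" "kB d y \<in> carrier_mat (kr d y) (Fo d y)"
    "kB d y * kA d y = 1\<^sub>m (kr d y)" "inK d y (kA d y)"
    "inK d y N \<Longrightarrow> kA d y * (kB d y * N) = N"
proof -
  have "KP (\<theta> d y) (Fo d y) (kt d y)" unfolding kt_def by (rule KP_some[OF th_car[OF d]])
  hence P: "kA d y \<in> carrier_mat (Fo d y) (kr d y) \<and> kB d y \<in> carrier_mat (kr d y) (Fo d y) \<and>
      kB d y * kA d y = 1\<^sub>m (kr d y) \<and> \<theta> d y * kA d y = 0\<^sub>m (Fo d y) (kr d y) \<and>
      (\<forall>c N. N \<in> carrier_mat (Fo d y) c \<longrightarrow> \<theta> d y * N = 0\<^sub>m (Fo d y) c \<longrightarrow> kA d y * (kB d y * N) = N)"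
    unfolding KP_def kr_def kA_def kB_def by (simp add: case_prod_beta)
  thus "kA d y \<in> carrier_mat (Fo d y) (kr d y)" "kB d y \<in> carrier_mat (kr d y) (Fo d y)"
    "kB d y * kA d y = 1\<^sub>m (kr d y)" by auto
  show "inK d y (kA d y)" using P unfolding inK_def by auto
  show "inK d y N \<Longrightarrow> kA d y * (kB d y * N) = N" using P unfolding inK_def by blast
qed

lemma inK_F: assumes d: "d \<in> objs X" and e: "e \<in> objs X" and f: "f \<in> homs X d e" and y: "y \<in> Y"
  and N: "inK d y N" shows "inK e y (Fm f y * N)"
proof -
  have Nc: "N \<in> carrier_mat (Fo d y) (dim_col N)" and N0: "\<theta> d y * N = 0\<^sub>m (Fo d y) (dim_col N)"
    using N unfolding inK_def by auto
  note Ff = Fm_car[OF d e f, of y]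
  have "\<theta> e y * (Fm f y * N) = (\<theta> e y * Fm f y) * N"
    by (rule assoc_mult_mat[symmetric, OF th_car[OF e] Ff Nc])
  also have "\<dots> = (Fm f y * \<theta> d y) * N" using th_nat[OF d e f y] by simp
  also have "\<dots> = Fm f y * (\<theta> d y * N)" by (rule assoc_mult_mat[OF Ff th_car[OF d] Nc])
  also have "\<dots> = 0\<^sub>m (Fo e y) (dim_col N)" unfolding N0 by (rule right_mult_zero_mat[OF Ff])
  finally show ?thesis unfolding inK_def using mult_carrier_mat[OF Ff Nc] by simp
qed

lemma inK_s: assumes g: "g < n" and d: "d \<in> objs X" and y: "y \<in> Y"
  and N: "inK (gobj n X aX g d) y N" shows "inK d (aY (ginv n g) y) (s g d y * N)"
proof -
  let ?gd = "gobj n X aX g d" and ?y' = "aY (ginv n g) y"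
  have gd: "?gd \<in> objs X" using gobj_objs[OF n1 GX] .
  have Nc: "N \<in> carrier_mat (Fo ?gd y) (dim_col N)" and N0: "\<theta> ?gd y * N = 0\<^sub>m (Fo ?gd y) (dim_col N)"
    using N unfolding inK_def by auto
  note S = s_at(1)[OF g d y]
  have "\<theta> d ?y' * (s g d y * N) = (\<theta> d ?y' * s g d y) * N"
    by (rule assoc_mult_mat[symmetric, OF th_car[OF d] S Nc])
  also have "\<dots> = (s g d y * \<theta> ?gd y) * N" using th_s[OF g d y] by simp
  also have "\<dots> = s g d y * (\<theta> ?gd y * N)" by (rule assoc_mult_mat[OF S th_car[OF gd] Nc])
  also have "\<dots> = 0\<^sub>m (Fo d ?y') (dim_col N)" unfolding N0 by (rule right_mult_zero_mat[OF S])
  finally show ?thesis unfolding inK_def using mult_carrier_mat[OF S Nc] by simp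
qed

lemma inK_sinv: assumes g: "g < n" and d: "d \<in> objs X" and y: "y \<in> Y"
  and N: "inK d (aY (ginv n g) y) N" shows "inK (gobj n X aX g d) y (sinv g d y * N)"
proof -
  let ?gd = "gobj n X aX g d" and ?y' = "aY (ginv n g) y"
  have gd: "?gd \<in> objs X" using gobj_objs[OF n1 GX] .
  have Nc: "N \<in> carrier_mat (Fo d ?y') (dim_col N)" and N0: "\<theta> d ?y' * N = 0\<^sub>m (Fo d ?y') (dim_col N)"
    using N unfolding inK_def by auto
  note S = s_at[OF g d y]
  note T1 = th_car[OF gd, of y] and T2 = th_car[OF d, of ?y']
  have "\<theta> ?gd y * sinv g d y = (sinv g d y * s g d y) * (\<theta> ?gd y * sinv g d y)"
    by (subst S(3), rule left_mult_one_mat[symmetric, OF mult_carrier_mat[OF T1 S(2)]])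
  also have "\<dots> = sinv g d y * ((s g d y * \<theta> ?gd y) * sinv g d y)"
    by (simp only: assoc_mult_mat[OF S(2) S(1) mult_carrier_mat[OF T1 S(2)]]
       assoc_mult_mat[OF S(1) T1 S(2)])
  also have "\<dots> = sinv g d y * ((\<theta> d ?y' * s g d y) * sinv g d y)" using th_s[OF g d y] by simp
  also have "\<dots> = sinv g d y * (\<theta> d ?y' * (s g d y * sinv g d y))"
    by (simp only: assoc_mult_mat[OF T2 S(1) S(2)])
  also have "\<dots> = sinv g d y * \<theta> d ?y'" by (subst S(4), rule arg_cong[of _ _ "\<lambda>M. sinv g d y * M"], rule right_mult_one_mat[OF T2])
  finally have comm: "\<theta> ?gd y * sinv g d y = sinv g d y * \<theta> d ?y'" .
  have "\<theta> ?gd y * (sinv g d y * N) = (\<theta> ?gd y * sinv g d y) * N"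
    by (rule assoc_mult_mat[symmetric, OF T1 S(2) Nc])
  also have "\<dots> = sinv g d y * (\<theta> d ?y' * N)" unfolding comm by (rule assoc_mult_mat[OF S(2) T2 Nc])
  also have "\<dots> = 0\<^sub>m (Fo ?gd y) (dim_col N)" unfolding N0 by (rule right_mult_zero_mat[OF S(2)])
  finally show ?thesis unfolding inK_def using mult_carrier_mat[OF S(2) Nc] by simp
qed


definition "Ho d = (\<lambda>y. if y \<in> Y then kr d y else 0)"
definition "Hm f = (\<lambda>y. if y \<in> Y then kB (codf X f) y * Fm f y * kA (domf X f) y else 0\<^sub>m 0 0)"
definition "Hs g d = (\<lambda>y. if y \<in> Y then kB d (aY (ginv n g) y) * s g d y * kA (gobj n X aX g d) y else 0\<^sub>m 0 0)"
definition "Hsi g d = (\<lambda>y. if y \<in> Y then kB (gobj n X aX g d) y * sinv g d y * kA d (aY (ginv n g) y) else 0\<^sub>m 0 0)"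
definition "iA d = (\<lambda>y. if y \<in> Y then kA d y else 0\<^sub>m 0 0)"

lemma Ho_at: "y \<in> Y \<Longrightarrow> Ho d y = kr d y" unfolding Ho_def by simp

lemma Hm_at: "f \<in> homs X d e \<Longrightarrow> d \<in> objs X \<Longrightarrow> e \<in> objs X \<Longrightarrow> y \<in> Y \<Longrightarrow>
   Hm f y = kB e y * Fm f y * kA d y"
  unfolding Hm_def using domf_codf[of f X d e] by simp

lemma ext_Y: "(\<And>y. y \<in> Y \<Longrightarrow> f y = g y) \<Longrightarrow> (\<And>y. y \<notin> Y \<Longrightarrow> f y = g y) \<Longrightarrow> f = g"
  by (rule ext, case_tac "x \<in> Y", auto)

lemma kclos: "d \<in> objs X \<Longrightarrow> inK d y N \<Longrightarrow> kA d y * (kB d y * N) = N"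
  by (rule kprops(5))

lemma Ho_objs: "Ho d \<in> objs Y" unfolding Ho_def objs_def by auto

lemma Hm_homs: assumes d: "d \<in> objs X" and e: "e \<in> objs X" and f: "f \<in> homs X d e"
  shows "Hm f \<in> homs Y (Ho d) (Ho e)"
proof (rule homsI)
  fix y assume y: "y \<in> Y"
  show "Hm f y \<in> carrier_mat (Ho e y) (Ho d y)"
    unfolding Hm_at[OF f d e y] Ho_at[OF y]
    using kprops(1)[OF d, of y] kprops(2)[OF e, of y] Fm_car[OF d e f, of y]
    by (intro mult_carrier_mat)
next
  fix y assume "y \<notin> Y" thus "Hm f y = 0\<^sub>m 0 0" unfolding Hm_def by simp
qed

lemma H_idm: assumes d: "d \<in> objs X" shows "Hm (idm X d) = idm Y (Ho d)"
proof (rule ext_Y)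
  fix y assume y: "y \<in> Y"
  have "Fm (idm X d) y = 1\<^sub>m (Fo d y)" using F_idm[OF d] idm_at[OF y] by simp
  hence "Hm (idm X d) y = kB d y * 1\<^sub>m (Fo d y) * kA d y" unfolding Hm_at[OF idm_homs d d y] by simp
  also have "\<dots> = kB d y * kA d y" using kprops(2)[OF d, of y] by simp
  also have "\<dots> = idm Y (Ho d) y" unfolding idm_at[OF y] Ho_at[OF y] by (rule kprops(3)[OF d])
  finally show "Hm (idm X d) y = idm Y (Ho d) y" .
next
  fix y assume "y \<notin> Y" thus "Hm (idm X d) y = idm Y (Ho d) y" unfolding Hm_def idm_def by simp
qed

lemma H_cmp: assumes d: "d \<in> objs X" and e: "e \<in> objs X" and k: "k \<in> objs X"
  and f: "f \<in> homs X d e" and f': "f' \<in> homs X e k"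
  shows "Hm (cmp X f' f) = cmp Y (Hm f') (Hm f)"
proof (rule ext_Y)
  fix y assume y: "y \<in> Y"
  note c1 = kprops(1)[OF d, of y] and c2 = kprops(2)[OF e, of y] and c3 = kprops(1)[OF e, of y]
    and c4 = kprops(2)[OF k, of y] and c5 = Fm_car[OF d e f, of y] and c6 = Fm_car[OF e k f', of y]
  have cl: "kA e y * (kB e y * (Fm f y * kA d y)) = Fm f y * kA d y"
    by (rule kclos[OF e inK_F[OF d e f y kprops(4)[OF d]]])
  have "Hm (cmp X f' f) y = kB k y * (Fm f' y * Fm f y) * kA d y"
    unfolding Hm_at[OF cmp_homs[OF f f'] d k y] F_cmp[OF d e k f f'] cmp_at[OF y] ..
  also have "\<dots> = cmp Y (Hm f') (Hm f) y"
    unfolding cmp_at[OF y] Hm_at[OF f d e y] Hm_at[OF f' e k y]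
    using cD[OF c1] cD[OF c2] cD[OF c3] cD[OF c4] cD[OF c5] cD[OF c6] cl by (simp add: assoc_dim)
  finally show "Hm (cmp X f' f) y = cmp Y (Hm f') (Hm f) y" .
next
  fix y assume "y \<notin> Y" thus "Hm (cmp X f' f) y = cmp Y (Hm f') (Hm f) y" unfolding Hm_def cmp_def by simp
qed


lemma H_addm: assumes d: "d \<in> objs X" and e: "e \<in> objs X"
  and f: "f \<in> homs X d e" and f': "f' \<in> homs X d e"
  shows "Hm (addm X f f') = addm Y (Hm f) (Hm f')"
proof (rule ext_Y)
  fix y assume y: "y \<in> Y"
  note c1 = kprops(1)[OF d, of y] and c2 = kprops(2)[OF e, of y]
    and c5 = Fm_car[OF d e f, of y] and c6 = Fm_car[OF d e f', of y]
  show "Hm (addm X f f') y = addm Y (Hm f) (Hm f') y"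
    unfolding Hm_at[OF addm_homs[OF f f'] d e y] F_addm[OF d e f f'] addm_at[OF y]
      Hm_at[OF f d e y] Hm_at[OF f' d e y]
    using cD[OF c1] cD[OF c2] cD[OF c5] cD[OF c6] by (simp add: mult_add_dim add_mult_dim)
next
  fix y assume "y \<notin> Y" thus "Hm (addm X f f') y = addm Y (Hm f) (Hm f') y" unfolding Hm_def addm_def by simp
qed

lemma H_smultm: assumes d: "d \<in> objs X" and e: "e \<in> objs X" and f: "f \<in> homs X d e"
  shows "Hm (smultm X c f) = smultm Y c (Hm f)"
proof (rule ext_Y)
  fix y assume y: "y \<in> Y"
  note c1 = kprops(1)[OF d, of y] and c2 = kprops(2)[OF e, of y] and c5 = Fm_car[OF d e f, of y]
  show "Hm (smultm X c f) y = smultm Y c (Hm f) y"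
    unfolding Hm_at[OF smultm_homs[OF f] d e y] F_smultm[OF d e f] smultm_at[OF y] Hm_at[OF f d e y]
    using cD[OF c1] cD[OF c2] cD[OF c5] by (simp add: mult_smult_dim smult_mult_dim)
next
  fix y assume "y \<notin> Y" thus "Hm (smultm X c f) y = smultm Y c (Hm f) y" unfolding Hm_def smultm_def by simp
qed

lemma H_LF: "linear_functor X Y Ho Hm"
  unfolding linear_functor_def
  by (intro conjI ballI allI Ho_objs Hm_homs H_idm H_cmp H_addm H_smultm)

lemma gobjY_at: "y \<in> Y \<Longrightarrow> gobj n Y aY g e y = e (aY (ginv n g) y)"
  by (rule gobj_at[OF n1 GY])

lemma gmorY_at: "y \<in> Y \<Longrightarrow> gmor n Y aY g f y = f (aY (ginv n g) y)"
  by (rule gmor_at[OF n1 GY])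

lemma Hs_at: "y \<in> Y \<Longrightarrow> Hs g d y = kB d (aY (ginv n g) y) * s g d y * kA (gobj n X aX g d) y"
  unfolding Hs_def by simp

lemma Hsi_at: "y \<in> Y \<Longrightarrow> Hsi g d y = kB (gobj n X aX g d) y * sinv g d y * kA d (aY (ginv n g) y)"
  unfolding Hsi_def by simp

lemma Hs_homs: assumes g: "g < n" and d: "d \<in> objs X"
  shows "Hs g d \<in> homs Y (Ho (gobj n X aX g d)) (gobj n Y aY g (Ho d))"
    "Hsi g d \<in> homs Y (gobj n Y aY g (Ho d)) (Ho (gobj n X aX g d))"
proof -
  have gd: "gobj n X aX g d \<in> objs X" by (rule gobj_objs[OF n1 GX])
  show "Hs g d \<in> homs Y (Ho (gobj n X aX g d)) (gobj n Y aY g (Ho d))"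
  proof (rule homsI)
    fix y assume y: "y \<in> Y"
    show "Hs g d y \<in> carrier_mat (gobj n Y aY g (Ho d) y) (Ho (gobj n X aX g d) y)"
      unfolding Hs_at[OF y] gobjY_at[OF y] Ho_at[OF y] Ho_at[OF aYi[OF g y]]
      using kprops(2)[OF d] s_at(1)[OF g d y] kprops(1)[OF gd] by (intro mult_carrier_mat)
  qed (simp add: Hs_def)
  show "Hsi g d \<in> homs Y (gobj n Y aY g (Ho d)) (Ho (gobj n X aX g d))"
  proof (rule homsI)
    fix y assume y: "y \<in> Y"
    show "Hsi g d y \<in> carrier_mat (Ho (gobj n X aX g d) y) (gobj n Y aY g (Ho d) y)"
      unfolding Hsi_at[OF y] gobjY_at[OF y] Ho_at[OF y] Ho_at[OF aYi[OF g y]]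
      using kprops(2)[OF gd] s_at(2)[OF g d y] kprops(1)[OF d] by (intro mult_carrier_mat)
  qed (simp add: Hsi_def)
qed

lemma Hs_iso: assumes g: "g < n" and d: "d \<in> objs X"
  shows "is_iso Y (Ho (gobj n X aX g d)) (gobj n Y aY g (Ho d)) (Hs g d)"
proof -
  let ?gd = "gobj n X aX g d"
  have gd: "?gd \<in> objs X" by (rule gobj_objs[OF n1 GX])
  have c1: "cmp Y (Hsi g d) (Hs g d) = idm Y (Ho ?gd)"
  proof (rule ext_Y)
    fix y assume y: "y \<in> Y"
    let ?y' = "aY (ginv n g) y"
    note S = s_at[OF g d y]
    note k1 = kprops(1)[OF gd, of y] and k2 = kprops(2)[OF gd, of y]
      and k3 = kprops(1)[OF d, of ?y'] and k4 = kprops(2)[OF d, of ?y']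
    have cl: "kA d ?y' * (kB d ?y' * (s g d y * kA ?gd y)) = s g d y * kA ?gd y"
      by (rule kclos[OF d inK_s[OF g d y kprops(4)[OF gd]]])
    have ts: "sinv g d y * (s g d y * kA ?gd y) = kA ?gd y"
      using assoc_mult_mat[OF S(2) S(1) k1] S(3) k1 by simp
    show "cmp Y (Hsi g d) (Hs g d) y = idm Y (Ho ?gd) y"
      unfolding cmp_at[OF y] Hsi_at[OF y] Hs_at[OF y] idm_at[OF y] Ho_at[OF y]
      using cD[OF S(1)] cD[OF S(2)] cD[OF k1] cD[OF k2] cD[OF k3] cD[OF k4] cl ts kprops(3)[OF gd, of y]
      by (simp add: assoc_dim)
  qed (simp add: cmp_def idm_def)
  have c2: "cmp Y (Hs g d) (Hsi g d) = idm Y (gobj n Y aY g (Ho d))"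
  proof (rule ext_Y)
    fix y assume y: "y \<in> Y"
    let ?y' = "aY (ginv n g) y"
    note S = s_at[OF g d y]
    note k1 = kprops(1)[OF gd, of y] and k2 = kprops(2)[OF gd, of y]
      and k3 = kprops(1)[OF d, of ?y'] and k4 = kprops(2)[OF d, of ?y']
    have cl: "kA ?gd y * (kB ?gd y * (sinv g d y * kA d ?y')) = sinv g d y * kA d ?y'"
      by (rule kclos[OF gd inK_sinv[OF g d y kprops(4)[OF d]]])
    have ts: "s g d y * (sinv g d y * kA d ?y') = kA d ?y'"
      using assoc_mult_mat[OF S(1) S(2) k3] S(4) k3 by simp
    show "cmp Y (Hs g d) (Hsi g d) y = idm Y (gobj n Y aY g (Ho d)) y"
      unfolding cmp_at[OF y] Hsi_at[OF y] Hs_at[OF y] idm_at[OF y] gobjY_at[OF y] Ho_at[OF aYi[OF g y]]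
      using cD[OF S(1)] cD[OF S(2)] cD[OF k1] cD[OF k2] cD[OF k3] cD[OF k4] cl ts kprops(3)[OF d, of ?y']
      by (simp add: assoc_dim)
  qed (simp add: cmp_def idm_def)
  show ?thesis unfolding is_iso_def using Hs_homs[OF g d] c1 c2 by blast
qed


lemma Hs_nat: assumes g: "g < n" and d: "d \<in> objs X" and e: "e \<in> objs X" and f: "f \<in> homs X d e"
  shows "cmp Y (gmor n Y aY g (Hm f)) (Hs g d) = cmp Y (Hs g e) (Hm (gmor n X aX g f))"
proof (rule ext_Y)
  fix y assume y: "y \<in> Y"
  let ?y' = "aY (ginv n g) y" and ?gd = "gobj n X aX g d" and ?ge = "gobj n X aX g e"
  have y': "?y' \<in> Y" by (rule aYi[OF g y])
  have gd: "?gd \<in> objs X" and ge: "?ge \<in> objs X" by (rule gobj_objs[OF n1 GX])+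
  have gf: "gmor n X aX g f \<in> homs X ?gd ?ge" by (rule gmor_homs[OF n1 GX g f])
  note Sd = s_at(1)[OF g d y] and Se = s_at(1)[OF g e y]
  note k1 = kprops(2)[OF e, of ?y'] and k2 = kprops(1)[OF d, of ?y'] and k3 = kprops(2)[OF d, of ?y']
    and k4 = kprops(1)[OF gd, of y] and k5 = kprops(1)[OF ge, of y] and k6 = kprops(2)[OF ge, of y]
    and F1 = Fm_car[OF d e f, of ?y'] and F2 = Fm_car[OF gd ge gf, of y]
  have cl1: "kA d ?y' * (kB d ?y' * (s g d y * kA ?gd y)) = s g d y * kA ?gd y"
    by (rule kclos[OF d inK_s[OF g d y kprops(4)[OF gd]]])
  have cl2: "kA ?ge y * (kB ?ge y * (Fm (gmor n X aX g f) y * kA ?gd y)) = Fm (gmor n X aX g f) y * kA ?gd y"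
    by (rule kclos[OF ge inK_F[OF gd ge gf y kprops(4)[OF gd]]])
  have "cmp Y (gmor n Y aY g (Fm f)) (s g d) y = cmp Y (s g e) (Fm (gmor n X aX g f)) y"
    using s_nat[OF g d e f] by simp
  hence nat0: "Fm f ?y' * s g d y = s g e y * Fm (gmor n X aX g f) y"
    unfolding cmp_at[OF y] gmorY_at[OF y] .
  have nat': "Fm f ?y' * (s g d y * kA ?gd y) = s g e y * (Fm (gmor n X aX g f) y * kA ?gd y)"
    using assoc_mult_mat[OF F1 Sd k4] assoc_mult_mat[OF Se F2 k4] nat0 by simp
  show "cmp Y (gmor n Y aY g (Hm f)) (Hs g d) y = cmp Y (Hs g e) (Hm (gmor n X aX g f)) y"
    unfolding cmp_at[OF y] gmorY_at[OF y] Hm_at[OF f d e y'] Hs_at[OF y] Hm_at[OF gf gd ge y]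
    using cD[OF Sd] cD[OF Se] cD[OF k1] cD[OF k2] cD[OF k3] cD[OF k4] cD[OF k5] cD[OF k6] cD[OF F1] cD[OF F2]
      cl1 cl2 nat' by (simp add: assoc_dim)
qed (simp add: cmp_def)

lemma modc_homs: "modc n X aX PX g h d \<in> homs X (gobj n X aX ((g + h) mod n) d) (gobj n X aX ((g + h) mod n) d)"
  by (rule homsI, auto simp: modc_def)

lemma smult_one_mult: "dim_row M = k \<Longrightarrow> (a \<cdot>\<^sub>m 1\<^sub>m k) * M = (a::'a) \<cdot>\<^sub>m M"
  by (subst smult_mult_dim, auto)

lemma Hs_mod: assumes g: "g < n" and h: "h < n" and d: "d \<in> objs X"
  shows "cmp Y (modc n Y aY PY g h (Ho d)) (Hs ((g + h) mod n) d)
        = cmp Y (cmp Y (gmor n Y aY g (Hs h d)) (Hs g (gobj n X aX h d))) (Hm (modc n X aX PX g h d))"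
proof (rule ext_Y)
  fix y assume y: "y \<in> Y"
  let ?gh = "(g + h) mod n" and ?b = "gobj n X aX h d" and ?c = "gobj n X aX ((g + h) mod n) d"
  let ?y' = "aY (ginv n g) y" and ?y'' = "aY (ginv n ((g + h) mod n)) y"
  have gh: "?gh < n" using n1 by simp
  have y': "?y' \<in> Y" by (rule aYi[OF g y])
  have y'': "aY (ginv n h) ?y' = ?y''" using act_ginv_comp[OF n1 GY g h y] by simp
  have b: "?b \<in> objs X" and c: "?c \<in> objs X" by (rule gobj_objs[OF n1 GX])+
  have gb: "gobj n X aX g ?b = ?c" by (rule gobj_gobj[OF n1 GX d g h])
  have mX: "modc n X aX PX g h d \<in> homs X ?c ?c" by (rule modc_homs)
  have Sgh: "s ?gh d y \<in> carrier_mat (Fo d ?y'') (Fo ?c y)" using s_at(1)[OF gh d y] .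
  have Sh: "s h d ?y' \<in> carrier_mat (Fo d ?y'') (Fo ?b ?y')" using s_at(1)[OF h d y'] unfolding y'' .
  have Sg: "s g ?b y \<in> carrier_mat (Fo ?b ?y') (Fo ?c y)" using s_at(1)[OF g b y] unfolding gb .
  note FX = Fm_car[OF c c mX, of y]
  note k1 = kprops(2)[OF d, of ?y''] and k2 = kprops(1)[OF c, of y] and k3 = kprops(2)[OF c, of y]
    and k4 = kprops(1)[OF b, of ?y'] and k5 = kprops(2)[OF b, of ?y']
  have cl1: "kA ?c y * (kB ?c y * (Fm (modc n X aX PX g h d) y * kA ?c y)) = Fm (modc n X aX PX g h d) y * kA ?c y"
    by (rule kclos[OF c inK_F[OF c c mX y kprops(4)[OF c]]])
  have iK: "inK (gobj n X aX g ?b) y (Fm (modc n X aX PX g h d) y * kA ?c y)"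
    unfolding gb by (rule inK_F[OF c c mX y kprops(4)[OF c]])
  have cl2: "kA ?b ?y' * (kB ?b ?y' * (s g ?b y * (Fm (modc n X aX PX g h d) y * kA ?c y)))
      = s g ?b y * (Fm (modc n X aX PX g h d) y * kA ?c y)"
    by (rule kclos[OF b inK_s[OF g b y iK]])
  have "cmp Y (modc n Y aY PY g h (Fo d)) (s ?gh d) y
        = cmp Y (cmp Y (gmor n Y aY g (s h d)) (s g ?b)) (Fm (modc n X aX PX g h d)) y"
    using s_mod[OF g h d] by simp
  hence "(PY g h y \<cdot>\<^sub>m 1\<^sub>m (Fo d ?y'')) * s ?gh d y = (s h d ?y' * s g ?b y) * Fm (modc n X aX PX g h d) y"
    unfolding cmp_at[OF y] gmorY_at[OF y] using y by (simp add: modc_def gobjY_at)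
  hence fc0: "PY g h y \<cdot>\<^sub>m s ?gh d y = s h d ?y' * (s g ?b y * Fm (modc n X aX PX g h d) y)"
    using cD[OF Sgh] assoc_mult_mat[OF Sh Sg FX] by (simp add: smult_one_mult)
  have fc: "s h d ?y' * (s g ?b y * (Fm (modc n X aX PX g h d) y * kA ?c y)) = PY g h y \<cdot>\<^sub>m (s ?gh d y * kA ?c y)"
  proof -
    have "s h d ?y' * (s g ?b y * (Fm (modc n X aX PX g h d) y * kA ?c y))
       = (s h d ?y' * (s g ?b y * Fm (modc n X aX PX g h d) y)) * kA ?c y"
      using cD[OF Sh] cD[OF Sg] cD[OF FX] cD[OF k2] by (simp add: assoc_dim)
    also have "\<dots> = (PY g h y \<cdot>\<^sub>m s ?gh d y) * kA ?c y" unfolding fc0 ..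
    also have "\<dots> = PY g h y \<cdot>\<^sub>m (s ?gh d y * kA ?c y)" using cD[OF Sgh] cD[OF k2] by (simp add: smult_mult_dim)
    finally show ?thesis .
  qed
  have LHS: "cmp Y (modc n Y aY PY g h (Ho d)) (Hs ?gh d) y = (PY g h y \<cdot>\<^sub>m 1\<^sub>m (kr d ?y'')) * (kB d ?y'' * s ?gh d y * kA ?c y)"
    unfolding cmp_at[OF y] Hs_at[OF y] using y by (simp add: modc_def gobjY_at Ho_at aYi[OF gh y])
  have RHS: "cmp Y (cmp Y (gmor n Y aY g (Hs h d)) (Hs g ?b)) (Hm (modc n X aX PX g h d)) y
     = (kB d ?y'' * s h d ?y' * kA ?b ?y') * (kB ?b ?y' * s g ?b y * kA ?c y) * (kB ?c y * Fm (modc n X aX PX g h d) y * kA ?c y)"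
    unfolding cmp_at[OF y] gmorY_at[OF y] Hs_at[OF y] Hs_at[OF y'] Hm_at[OF mX c c y] y'' gb ..
  show "cmp Y (modc n Y aY PY g h (Ho d)) (Hs ?gh d) y
        = cmp Y (cmp Y (gmor n Y aY g (Hs h d)) (Hs g ?b)) (Hm (modc n X aX PX g h d)) y"
    unfolding LHS RHS
    using cD[OF Sgh] cD[OF Sh] cD[OF Sg] cD[OF FX] cD[OF k1] cD[OF k2] cD[OF k3] cD[OF k4] cD[OF k5]
      cl1 cl2 fc by (simp add: assoc_dim smult_one_mult mult_smult_dim)
qed (simp add: cmp_def)

lemma H_MF: "module_functor n X aX PX Y aY PY (Ho, Hm, Hs)"
  unfolding module_functor_def prod.case
  by (intro conjI allI ballI impI H_LF Hs_iso Hs_nat Hs_mod)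


lemma iA_at: "y \<in> Y \<Longrightarrow> iA d y = kA d y" unfolding iA_def by simp

lemma iA_homs: "d \<in> objs X \<Longrightarrow> iA d \<in> homs Y (Ho d) (Fo d)"
  by (rule homsI, auto simp: iA_def Ho_def kprops(1))

lemma iA_mor: "mf_mor n X aX Y aY (Ho, Hm, Hs) (Fo, Fm, s) iA"
  unfolding mf_mor_def prod.case
proof (intro conjI allI ballI impI)
  fix d assume d: "d \<in> objs X" show "iA d \<in> homs Y (Ho d) (Fo d)" by (rule iA_homs[OF d])
next
  fix d e and f :: "'x \<Rightarrow> 'a mat" assume d: "d \<in> objs X" and e: "e \<in> objs X" and f: "f \<in> homs X d e"
  show "cmp Y (Fm f) (iA d) = cmp Y (iA e) (Hm f)"
  proof (rule ext_Y)
    fix y assume y: "y \<in> Y"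
    note k1 = kprops(1)[OF d, of y] and k2 = kprops(1)[OF e, of y] and k3 = kprops(2)[OF e, of y]
      and F1 = Fm_car[OF d e f, of y]
    have cl: "kA e y * (kB e y * (Fm f y * kA d y)) = Fm f y * kA d y"
      by (rule kclos[OF e inK_F[OF d e f y kprops(4)[OF d]]])
    show "cmp Y (Fm f) (iA d) y = cmp Y (iA e) (Hm f) y"
      unfolding cmp_at[OF y] iA_at[OF y] Hm_at[OF f d e y]
      using cD[OF k1] cD[OF k2] cD[OF k3] cD[OF F1] cl by (simp add: assoc_dim)
  qed (simp add: cmp_def)
next
  fix g d assume g: "g < n" and d: "d \<in> objs X"
  show "cmp Y (s g d) (iA (gobj n X aX g d)) = cmp Y (gmor n Y aY g (iA d)) (Hs g d)"
  proof (rule ext_Y)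
    fix y assume y: "y \<in> Y"
    let ?y' = "aY (ginv n g) y" and ?gd = "gobj n X aX g d"
    have gd: "?gd \<in> objs X" by (rule gobj_objs[OF n1 GX])
    note S = s_at(1)[OF g d y]
    note k1 = kprops(1)[OF gd, of y] and k2 = kprops(1)[OF d, of ?y'] and k3 = kprops(2)[OF d, of ?y']
    have cl: "kA d ?y' * (kB d ?y' * (s g d y * kA ?gd y)) = s g d y * kA ?gd y"
      by (rule kclos[OF d inK_s[OF g d y kprops(4)[OF gd]]])
    show "cmp Y (s g d) (iA ?gd) y = cmp Y (gmor n Y aY g (iA d)) (Hs g d) y"
      unfolding cmp_at[OF y] iA_at[OF y] gmorY_at[OF y] iA_at[OF aYi[OF g y]] Hs_at[OF y]
      using cD[OF k1] cD[OF k2] cD[OF k3] cD[OF S] cl by (simp add: assoc_dim)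
  qed (simp add: cmp_def)
qed

lemma iA_mono: "mf_mono n X aX PX Y aY PY (Ho, Hm, Hs) (Fo, Fm, s) iA"
  unfolding mf_mono_def
proof (intro conjI allI impI iA_mor ballI)
  fix K \<alpha> \<beta> d
  assume a: "mf_mor n X aX Y aY K (Ho, Hm, Hs) \<alpha>" and b: "mf_mor n X aX Y aY K (Ho, Hm, Hs) \<beta>"
    and eq: "\<forall>d\<in>objs X. cmp Y (iA d) (\<alpha> d) = cmp Y (iA d) (\<beta> d)" and d: "d \<in> objs X"
  obtain Ko Km Ks where K: "K = (Ko, Km, Ks)" by (cases K)
  have ah: "\<alpha> d \<in> homs Y (Ko d) (Ho d)"
    using a unfolding K mf_mor_def prod.case using d by (elim conjE, elim ballE, auto)
  have bh: "\<beta> d \<in> homs Y (Ko d) (Ho d)"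
    using b unfolding K mf_mor_def prod.case using d by (elim conjE, elim ballE, auto)
  have eqd: "cmp Y (iA d) (\<alpha> d) = cmp Y (iA d) (\<beta> d)" using eq d by (elim ballE, auto)
  show "\<alpha> d = \<beta> d"
  proof (rule ext_Y)
    fix y assume y: "y \<in> Y"
    have ac: "\<alpha> d y \<in> carrier_mat (kr d y) (Ko d y)" using homsD[OF ah y] Ho_at[OF y] by simp
    have bc: "\<beta> d y \<in> carrier_mat (kr d y) (Ko d y)" using homsD[OF bh y] Ho_at[OF y] by simp
    have "kA d y * \<alpha> d y = kA d y * \<beta> d y" using fun_cong[OF eqd, of y] unfolding cmp_at[OF y] iA_at[OF y] .
    hence "kB d y * (kA d y * \<alpha> d y) = kB d y * (kA d y * \<beta> d y)" by simp
    thus "\<alpha> d y = \<beta> d y"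
      using assoc_mult_mat[OF kprops(2)[OF d] kprops(1)[OF d] ac, symmetric]
        assoc_mult_mat[OF kprops(2)[OF d] kprops(1)[OF d] bc, symmetric] kprops(3)[OF d, of y] ac bc
      by simp
  next
    fix y assume "y \<notin> Y" thus "\<alpha> d y = \<beta> d y" using homsD2[OF ah] homsD2[OF bh] by simp
  qed
qed

theorem schur:
  assumes SM: "simple_mf n X aX PX Y aY PY (Fo, Fm, s)"
  shows "(\<forall>d\<in>objs X. \<forall>y\<in>Y. \<theta> d y = 0\<^sub>m (Fo d y) (Fo d y)) \<or>
    (\<forall>d\<in>objs X. \<forall>y\<in>Y. \<forall>c N. N \<in> carrier_mat (Fo d y) c \<longrightarrow> \<theta> d y * N = 0\<^sub>m (Fo d y) c \<longrightarrow> N = 0\<^sub>m (Fo d y) c)"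
proof -
  have "mf_zero X (Ho, Hm, Hs) \<or> mf_iso n X aX Y aY (Ho, Hm, Hs) (Fo, Fm, s) iA"
    using SM[unfolded simple_mf_def] H_MF iA_mono by blast
  thus ?thesis
  proof
    assume z: "mf_zero X (Ho, Hm, Hs)"
    show ?thesis
    proof (rule disjI2, intro ballI allI impI)
      fix d y c N assume d: "d \<in> objs X" and y: "y \<in> Y" and N: "N \<in> carrier_mat (Fo d y) c"
        and N0: "\<theta> d y * N = 0\<^sub>m (Fo d y) c"
      have "Ho d y = 0" using z d unfolding mf_zero_def by simp
      hence r0: "kr d y = 0" using Ho_at[OF y] by simp
      have "inK d y N" unfolding inK_def using N N0 by auto
      hence "N = kA d y * (kB d y * N)" using kclos[OF d] by simp
      also have "\<dots> = 0\<^sub>m (Fo d y) c"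
        using mult_zero_dim0[of "kA d y" "Fo d y" "kB d y * N" c] kprops(1,2)[OF d, of y] N r0 by auto
      finally show "N = 0\<^sub>m (Fo d y) c" .
    qed
  next
    assume i: "mf_iso n X aX Y aY (Ho, Hm, Hs) (Fo, Fm, s) iA"
    then obtain \<phi> where ph: "mf_mor n X aX Y aY (Fo, Fm, s) (Ho, Hm, Hs) \<phi>"
      and inv: "\<forall>d\<in>objs X. cmp Y (\<phi> d) (iA d) = idm Y (Ho d) \<and> cmp Y (iA d) (\<phi> d) = idm Y (Fo d)"
      unfolding mf_iso_def by auto
    show ?thesis
    proof (rule disjI1, intro ballI)
      fix d y assume d: "d \<in> objs X" and y: "y \<in> Y"
      have phh: "\<phi> d \<in> homs Y (Fo d) (Ho d)"
        using ph d unfolding mf_mor_def prod.case by (elim conjE, elim ballE, auto)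
      have pc: "\<phi> d y \<in> carrier_mat (kr d y) (Fo d y)" using homsD[OF phh y] Ho_at[OF y] by simp
      have "cmp Y (iA d) (\<phi> d) = idm Y (Fo d)" using inv d by auto
      from fun_cong[OF this, of y] have AP: "kA d y * \<phi> d y = 1\<^sub>m (Fo d y)"
        unfolding cmp_at[OF y] iA_at[OF y] idm_at[OF y] .
      have TA: "\<theta> d y * kA d y = 0\<^sub>m (Fo d y) (kr d y)"
        using kprops(4)[OF d, of y] kprops(1)[OF d, of y] unfolding inK_def by auto
      have "\<theta> d y = \<theta> d y * (kA d y * \<phi> d y)" unfolding AP by (rule right_mult_one_mat[symmetric, OF th_car[OF d]])
      also have "\<dots> = (\<theta> d y * kA d y) * \<phi> d y"
        by (rule assoc_mult_mat[symmetric, OF th_car[OF d] kprops(1)[OF d] pc])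
      also have "\<dots> = 0\<^sub>m (Fo d y) (Fo d y)" unfolding TA using pc by simp
      finally show "\<theta> d y = 0\<^sub>m (Fo d y) (Fo d y)" .
    qed
  qed
qed

end


definition phiX :: "'x set \<Rightarrow> ('x \<Rightarrow> nat) \<Rightarrow> 'x \<Rightarrow> nat \<Rightarrow> ('x \<Rightarrow> 'a::field mat)" where
  "phiX X d x j = (\<lambda>z. if z \<in> X then (if z = x then mat (d x) 1 (\<lambda>(i,_). if i = j then 1 else 0) else 0\<^sub>m (d z) 0) else 0\<^sub>m 0 0)"

definition piX :: "'x set \<Rightarrow> ('x \<Rightarrow> nat) \<Rightarrow> 'x \<Rightarrow> nat \<Rightarrow> ('x \<Rightarrow> 'a::field mat)" where
  "piX X d x j = (\<lambda>z. if z \<in> X then (if z = x then mat 1 (d x) (\<lambda>(_,i). if i = j then 1 else 0) else 0\<^sub>m 0 (d z)) else 0\<^sub>m 0 0)"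

lemma simple_obj_objs: "x \<in> X \<Longrightarrow> simple_obj x \<in> objs X"
  unfolding objs_def simple_obj_def by auto

lemma phiX_homs: "x \<in> X \<Longrightarrow> phiX X d x j \<in> homs X (simple_obj x) d"
  by (rule homsI, auto simp: phiX_def simple_obj_def)

lemma piX_homs: "x \<in> X \<Longrightarrow> piX X d x j \<in> homs X d (simple_obj x)"
  by (rule homsI, auto simp: piX_def simple_obj_def)

lemma phi_simple: "x \<in> X \<Longrightarrow> phiX X (simple_obj x) x 0 = idm X (simple_obj x)"
  unfolding phiX_def idm_def simple_obj_def by (intro ext, auto intro!: eq_matI)

lemma pi_simple: "x \<in> X \<Longrightarrow> piX X (simple_obj x) x 0 = idm X (simple_obj x)"
  unfolding piX_def idm_def simple_obj_def by (intro ext, auto intro!: eq_matI)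

lemma Sigma_simple: "x \<in> X \<Longrightarrow> Sigma X (\<lambda>z. {..<simple_obj x z}) = {(x, 0)}"
  unfolding simple_obj_def by (auto split: if_splits)

lemma cmp_f_phi: assumes f: "f \<in> homs X d e" and x: "x \<in> X" and j: "j < d x"
  shows "cmp X f (phiX X d x j) = hsumS X (simple_obj x) e {..<e x} (\<lambda>i. smultm X (f x $$ (i,j)) (phiX X e x i))"
proof (rule ext)
  fix z show "cmp X f (phiX X d x j) z = hsumS X (simple_obj x) e {..<e x} (\<lambda>i. smultm X (f x $$ (i,j)) (phiX X e x i)) z"
  proof (cases "z \<in> X")
    case True
    note fz = homsD[OF f True]
    show ?thesis
    proof (cases "z = x")
      case zx: True
      have "f x * mat (d x) 1 (\<lambda>(i,_). if i = j then 1 else 0) =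
          msumS (e x) 1 {..<e x} (\<lambda>i. f x $$ (i,j) \<cdot>\<^sub>m mat (e x) 1 (\<lambda>(r,_). if r = i then 1 else 0))"
      proof (rule eq_matI)
        fix r c assume rc: "r < dim_row (msumS (e x) 1 {..<e x} (\<lambda>i. f x $$ (i,j) \<cdot>\<^sub>m mat (e x) 1 (\<lambda>(r,_). if r = i then 1 else 0)))"
          "c < dim_col (msumS (e x) 1 {..<e x} (\<lambda>i. f x $$ (i,j) \<cdot>\<^sub>m mat (e x) 1 (\<lambda>(r,_). if r = i then 1 else 0)))"
        have r: "r < e x" and c: "c = 0" using rc by auto
        have fx: "f x \<in> carrier_mat (e x) (d x)" using fz zx by simp
        have "(f x * mat (d x) 1 (\<lambda>(i,_). if i = j then 1 else 0)) $$ (r, c) = (\<Sum>k<d x. f x $$ (r,k) * (if k = j then 1 else 0))"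
          using fx r c by (auto simp: scalar_prod_def row_def col_def intro!: sum.cong)
        also have "\<dots> = f x $$ (r, j)" using j by (simp add: sum.delta' if_distrib[of "\<lambda>t. _ * t"] cong: if_cong)
        also have "\<dots> = (\<Sum>i<e x. (f x $$ (i,j) \<cdot>\<^sub>m mat (e x) 1 (\<lambda>(r,_). if r = i then 1 else 0)) $$ (r, c))"
          using r c by (simp add: if_distrib[of "\<lambda>t. _ * t"] cong: if_cong)
        finally show "(f x * mat (d x) 1 (\<lambda>(i,_). if i = j then 1 else 0)) $$ (r, c) =
          msumS (e x) 1 {..<e x} (\<lambda>i. f x $$ (i,j) \<cdot>\<^sub>m mat (e x) 1 (\<lambda>(r,_). if r = i then 1 else 0)) $$ (r, c)"
          using r c by simp
      qed (insert fz zx, auto)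
      thus ?thesis using True zx unfolding cmp_def hsumS_def phiX_def smultm_def simple_obj_def by simp
    next
      case zx: False
      show ?thesis using True zx fz unfolding cmp_def hsumS_def phiX_def smultm_def simple_obj_def
        by (auto intro!: eq_matI)
    qed
  next
    case False thus ?thesis unfolding cmp_def hsumS_def by simp
  qed
qed

lemma cmp_pi_f: assumes f: "f \<in> homs X d e" and x: "x \<in> X" and i: "i < e x"
  shows "cmp X (piX X e x i) f = hsumS X d (simple_obj x) {..<d x} (\<lambda>j. smultm X (f x $$ (i,j)) (piX X d x j))"
proof (rule ext)
  fix z show "cmp X (piX X e x i) f z = hsumS X d (simple_obj x) {..<d x} (\<lambda>j. smultm X (f x $$ (i,j)) (piX X d x j)) z"
  proof (cases "z \<in> X")
    case True
    note fz = homsD[OF f True]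
    show ?thesis
    proof (cases "z = x")
      case zx: True
      have "mat 1 (e x) (\<lambda>(_,k). if k = i then 1 else 0) * f x =
          msumS 1 (d x) {..<d x} (\<lambda>j. f x $$ (i,j) \<cdot>\<^sub>m mat 1 (d x) (\<lambda>(_,c). if c = j then 1 else 0))"
      proof (rule eq_matI)
        fix r c assume rc: "r < dim_row (msumS 1 (d x) {..<d x} (\<lambda>j. f x $$ (i,j) \<cdot>\<^sub>m mat 1 (d x) (\<lambda>(_,c). if c = j then 1 else 0)))"
          "c < dim_col (msumS 1 (d x) {..<d x} (\<lambda>j. f x $$ (i,j) \<cdot>\<^sub>m mat 1 (d x) (\<lambda>(_,c). if c = j then 1 else 0)))"
        have r: "r = 0" and c: "c < d x" using rc by auto
        have fx: "f x \<in> carrier_mat (e x) (d x)" using fz zx by simp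
        have "(mat 1 (e x) (\<lambda>(_,k). if k = i then 1 else 0) * f x) $$ (r, c) = (\<Sum>k<e x. (if k = i then 1 else 0) * f x $$ (k,c))"
          using fx r c by (auto simp: scalar_prod_def row_def col_def intro!: sum.cong)
        also have "\<dots> = f x $$ (i, c)" using i by (simp add: if_distrib[of "\<lambda>t. t * _"] cong: if_cong)
        also have "\<dots> = (\<Sum>j<d x. (f x $$ (i,j) \<cdot>\<^sub>m mat 1 (d x) (\<lambda>(_,c). if c = j then 1 else 0)) $$ (r, c))"
          using r c by (simp add: if_distrib[of "\<lambda>t. _ * t"] cong: if_cong)
        finally show "(mat 1 (e x) (\<lambda>(_,k). if k = i then 1 else 0) * f x) $$ (r, c) =
          msumS 1 (d x) {..<d x} (\<lambda>j. f x $$ (i,j) \<cdot>\<^sub>m mat 1 (d x) (\<lambda>(_,c). if c = j then 1 else 0)) $$ (r, c)"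
          using r c by simp
      qed (insert fz zx, auto)
      thus ?thesis using True zx unfolding cmp_def hsumS_def piX_def smultm_def simple_obj_def by simp
    next
      case zx: False
      show ?thesis using True zx fz unfolding cmp_def hsumS_def piX_def smultm_def simple_obj_def
        by (auto intro!: eq_matI)
    qed
  next
    case False thus ?thesis unfolding cmp_def hsumS_def by simp
  qed
qed


lemma decomp_idm: assumes fin: "finite X" and d: "d \<in> objs X"
  shows "idm X d = hsumS X d d (Sigma X (\<lambda>x. {..<d x})) (\<lambda>(x,j). cmp X (phiX X d x j) (piX X d x j))"
proof (rule ext)
  fix z show "idm X d z = hsumS X d d (Sigma X (\<lambda>x. {..<d x})) (\<lambda>(x,j). cmp X (phiX X d x j) (piX X d x j)) z"
  proof (cases "z \<in> X")
    case True
    have "1\<^sub>m (d z) = msumS (d z) (d z) (Sigma X (\<lambda>x. {..<d x})) (\<lambda>p. (case p of (x,j) \<Rightarrow> cmp X (phiX X d x j) (piX X d x j)) z)"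
    proof (rule eq_matI)
      fix r c assume rc: "r < dim_row (msumS (d z) (d z) (Sigma X (\<lambda>x. {..<d x})) (\<lambda>p. (case p of (x,j) \<Rightarrow> cmp X (phiX X d x j) (piX X d x j)) z))"
        "c < dim_col (msumS (d z) (d z) (Sigma X (\<lambda>x. {..<d x})) (\<lambda>p. (case p of (x,j) \<Rightarrow> cmp X (phiX X d x j) (piX X d x j)) z))"
      hence r: "r < d z" and c: "c < d z" by auto
      let ?t = "\<lambda>x j. (cmp X (phiX X d x j) (piX X d x j) z) $$ (r, c)"
      have tv: "?t x j = (if x = z \<and> r = j \<and> c = j then 1 else 0)" if "x \<in> X" "j < d x" for x j
        using that r c True unfolding cmp_def phiX_def piX_def
        by (auto simp: scalar_prod_def row_def col_def)
      have "msumS (d z) (d z) (Sigma X (\<lambda>x. {..<d x})) (\<lambda>p. (case p of (x,j) \<Rightarrow> cmp X (phiX X d x j) (piX X d x j)) z) $$ (r,c)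
         = (\<Sum>p\<in>Sigma X (\<lambda>x. {..<d x}). ?t (fst p) (snd p))"
        using r c by (simp add: split_def)
      also have "\<dots> = (\<Sum>x\<in>X. \<Sum>j<d x. ?t x j)"
        using sum.Sigma[OF fin, of "\<lambda>x. {..<d x}" "\<lambda>x j. ?t x j", symmetric] by (simp add: split_def)
      also have "\<dots> = (\<Sum>x\<in>X. \<Sum>j<d x. (if x = z \<and> r = j \<and> c = j then 1 else 0))"
        by (intro sum.cong refl, rule tv, auto)
      also have "\<dots> = (\<Sum>j<d z. (if r = j \<and> c = j then 1 else 0))"
        using True fin by (subst sum.remove[of X z], auto intro!: sum.neutral)
      also have "\<dots> = (if r = c then 1 else 0)"
      proof (cases "r = c")
        case True thus ?thesis using r by (simp add: sum.delta)
      next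
        case False thus ?thesis by (intro trans[OF sum.neutral], auto)
      qed
      finally have eq: "msumS (d z) (d z) (Sigma X (\<lambda>x. {..<d x})) (\<lambda>p. (case p of (x,j) \<Rightarrow> cmp X (phiX X d x j) (piX X d x j)) z) $$ (r, c) = (if r = c then 1 else 0)" .
      show "1\<^sub>m (d z) $$ (r, c) = msumS (d z) (d z) (Sigma X (\<lambda>x. {..<d x})) (\<lambda>p. (case p of (x,j) \<Rightarrow> cmp X (phiX X d x j) (piX X d x j)) z) $$ (r, c)"
        unfolding eq by (rule index_one_mat(1)[OF r c])
    qed auto
    thus ?thesis using True unfolding idm_def hsumS_def by simp
  next
    case False thus ?thesis unfolding idm_def hsumS_def by simp
  qed
qed

context
  fixes n :: nat and X :: "'x set" and act :: "nat \<Rightarrow> 'x \<Rightarrow> 'x"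
  assumes n1: "1 \<le> n" and GS: "is_Gset n X act"
begin

lemma gmor_phiX: "g < n \<Longrightarrow> x \<in> X \<Longrightarrow> gmor n X act g (phiX X d x j) = phiX X (gobj n X act g d) (act g x) j"
  unfolding gmor_def phiX_def gobj_def
  by (intro ext, auto simp: act_inv1[OF n1 GS] act_inv2[OF n1 GS] act_in[OF n1 GS] act_inv_in[OF n1 GS])

lemma gmor_piX: "g < n \<Longrightarrow> x \<in> X \<Longrightarrow> gmor n X act g (piX X d x j) = piX X (gobj n X act g d) (act g x) j"
  unfolding gmor_def piX_def gobj_def
  by (intro ext, auto simp: act_inv1[OF n1 GS] act_inv2[OF n1 GS] act_in[OF n1 GS] act_inv_in[OF n1 GS])

lemma Sigma_gobj: assumes g: "g < n" shows "Sigma X (\<lambda>x. {..<gobj n X act g d x}) = (\<lambda>(x,j). (act g x, j)) ` Sigma X (\<lambda>x. {..<d x})"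
proof (rule Set.set_eqI)
  fix p show "p \<in> Sigma X (\<lambda>x. {..<gobj n X act g d x}) \<longleftrightarrow> p \<in> (\<lambda>(x,j). (act g x, j)) ` Sigma X (\<lambda>x. {..<d x})"
  proof
    assume "p \<in> Sigma X (\<lambda>x. {..<gobj n X act g d x})"
    then obtain x j where p: "p = (x,j)" and x: "x \<in> X" and j: "j < d (act (ginv n g) x)"
      unfolding gobj_def by auto
    show "p \<in> (\<lambda>(x,j). (act g x, j)) ` Sigma X (\<lambda>x. {..<d x})"
      using p x j act_inv2[OF n1 GS g x] act_inv_in[OF n1 GS g x]
      by (auto simp: image_iff, rule_tac x="act (ginv n g) x" in bexI, auto)
  next
    assume "p \<in> (\<lambda>(x,j). (act g x, j)) ` Sigma X (\<lambda>x. {..<d x})"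
    then obtain x j where p: "p = (act g x, j)" and x: "x \<in> X" and j: "j < d x" by auto
    thus "p \<in> Sigma X (\<lambda>x. {..<gobj n X act g d x})"
      using act_inv1[OF n1 GS g x] act_in[OF n1 GS g x] unfolding gobj_def by auto
  qed
qed

lemma inj_Sigma_act: "g < n \<Longrightarrow> inj_on (\<lambda>(x,j). (act g x, j)) (Sigma X B)"
  by (auto simp: inj_on_def dest: act_inj[OF n1 GS])

end


lemma hsumS_at: "y \<in> Y \<Longrightarrow> hsumS Y d e S f y = msumS (e y) (d y) S (\<lambda>a. f a y)"
  unfolding hsumS_def by simp

context MFS
begin

definition "mm x y = Fo (simple_obj x) y"

definition thE :: "('x \<Rightarrow> 'y \<Rightarrow> 'a mat) \<Rightarrow> ('x \<Rightarrow> nat) \<Rightarrow> ('y \<Rightarrow> 'a mat)" where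
  "thE E d = (\<lambda>y. if y \<in> Y then msumS (Fo d y) (Fo d y) (Sigma X (\<lambda>x. {..<d x}))
      (\<lambda>(x,j). Fm (phiX X d x j) y * E x y * Fm (piX X d x j) y) else 0\<^sub>m 0 0)"

lemma FmC: "d \<in> objs X \<Longrightarrow> e \<in> objs X \<Longrightarrow> f \<in> homs X d e \<Longrightarrow> Fm f y \<in> carrier_mat (Fo e y) (Fo d y)"
  by (rule objs_homs_carrier[OF F_obj F_obj F_hom])

lemma Fphi_car: "d \<in> objs X \<Longrightarrow> x \<in> X \<Longrightarrow> Fm (phiX X d x j) y \<in> carrier_mat (Fo d y) (mm x y)"
  unfolding mm_def by (rule FmC[OF simple_obj_objs _ phiX_homs])

lemma Fpi_car: "d \<in> objs X \<Longrightarrow> x \<in> X \<Longrightarrow> Fm (piX X d x j) y \<in> carrier_mat (mm x y) (Fo d y)"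
  unfolding mm_def by (rule FmC[OF _ simple_obj_objs piX_homs])

lemma F_f_phi: assumes d: "d \<in> objs X" and e: "e \<in> objs X" and f: "f \<in> homs X d e" and x: "x \<in> X"
  and j: "j < d x" and y: "y \<in> Y"
  shows "Fm f y * Fm (phiX X d x j) y = msumS (Fo e y) (mm x y) {..<e x} (\<lambda>i. f x $$ (i,j) \<cdot>\<^sub>m Fm (phiX X e x i) y)"
proof -
  have sx: "simple_obj x \<in> objs X" by (rule simple_obj_objs[OF x])
  have "Fm f y * Fm (phiX X d x j) y = Fm (cmp X f (phiX X d x j)) y"
    unfolding F_cmp[OF sx d e phiX_homs[OF x] f] cmp_at[OF y] ..
  also have "\<dots> = Fm (hsumS X (simple_obj x) e {..<e x} (\<lambda>i. smultm X (f x $$ (i,j)) (phiX X e x i))) y"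
    unfolding cmp_f_phi[OF f x j] ..
  also have "\<dots> = msumS (Fo e y) (mm x y) {..<e x} (\<lambda>i. Fm (smultm X (f x $$ (i,j)) (phiX X e x i)) y)"
    unfolding F_hsumS[OF finite_lessThan sx e smultm_homs[OF phiX_homs[OF x]]] hsumS_at[OF y] mm_def ..
  also have "\<dots> = msumS (Fo e y) (mm x y) {..<e x} (\<lambda>i. f x $$ (i,j) \<cdot>\<^sub>m Fm (phiX X e x i) y)"
    by (rule msumS_cong, unfold F_smultm[OF sx e phiX_homs[OF x]] smultm_at[OF y], rule refl)
  finally show ?thesis .
qed

lemma F_pi_f: assumes d: "d \<in> objs X" and e: "e \<in> objs X" and f: "f \<in> homs X d e" and x: "x \<in> X"
  and i: "i < e x" and y: "y \<in> Y"
  shows "Fm (piX X e x i) y * Fm f y = msumS (mm x y) (Fo d y) {..<d x} (\<lambda>j. f x $$ (i,j) \<cdot>\<^sub>m Fm (piX X d x j) y)"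
proof -
  have sx: "simple_obj x \<in> objs X" by (rule simple_obj_objs[OF x])
  have "Fm (piX X e x i) y * Fm f y = Fm (cmp X (piX X e x i) f) y"
    unfolding F_cmp[OF d e sx f piX_homs[OF x]] cmp_at[OF y] ..
  also have "\<dots> = Fm (hsumS X d (simple_obj x) {..<d x} (\<lambda>j. smultm X (f x $$ (i,j)) (piX X d x j))) y"
    unfolding cmp_pi_f[OF f x i] ..
  also have "\<dots> = msumS (mm x y) (Fo d y) {..<d x} (\<lambda>j. Fm (smultm X (f x $$ (i,j)) (piX X d x j)) y)"
    unfolding F_hsumS[OF finite_lessThan d sx smultm_homs[OF piX_homs[OF x]]] hsumS_at[OF y] mm_def ..
  also have "\<dots> = msumS (mm x y) (Fo d y) {..<d x} (\<lambda>j. f x $$ (i,j) \<cdot>\<^sub>m Fm (piX X d x j) y)"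
    by (rule msumS_cong, unfold F_smultm[OF d sx piX_homs[OF x]] smultm_at[OF y], rule refl)
  finally show ?thesis .
qed


lemma thE_at: "y \<in> Y \<Longrightarrow> thE E d y = msumS (Fo d y) (Fo d y) (Sigma X (\<lambda>x. {..<d x}))
      (\<lambda>(x,j). Fm (phiX X d x j) y * E x y * Fm (piX X d x j) y)"
  unfolding thE_def by simp

lemma thE_nat: assumes fin: "finite X" and Ec: "\<And>x. x \<in> X \<Longrightarrow> E x y \<in> carrier_mat (mm x y) (mm x y)"
  and d: "d \<in> objs X" and e: "e \<in> objs X" and f: "f \<in> homs X d e" and y: "y \<in> Y"
  shows "Fm f y * thE E d y = thE E e y * Fm f y"
proof -
  define G where "G x j i = f x $$ (i,j) \<cdot>\<^sub>m (Fm (phiX X e x i) y * E x y * Fm (piX X d x j) y)" for x j i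
  note Ff = FmC[OF d e f, of y]
  have fins: "\<forall>a\<in>X. finite {..<d a}" "\<forall>a\<in>X. finite {..<e a}" by auto
  have L: "Fm f y * thE E d y = msumS (Fo e y) (Fo d y) X (\<lambda>x. msumS (Fo e y) (Fo d y) {..<d x}
      (\<lambda>j. msumS (Fo e y) (Fo d y) {..<e x} (\<lambda>i. G x j i)))"
  proof -
    have "Fm f y * thE E d y = msumS (Fo e y) (Fo d y) (Sigma X (\<lambda>x. {..<d x}))
      (\<lambda>p. Fm f y * (case p of (x,j) \<Rightarrow> Fm (phiX X d x j) y * E x y * Fm (piX X d x j) y))"
      unfolding thE_at[OF y]
      by (rule mult_msumS_left[OF Ff], auto intro!: mult_carrier_mat Fphi_car[OF d] Fpi_car[OF d] Ec)
    also have "\<dots> = msumS (Fo e y) (Fo d y) X (\<lambda>x. msumS (Fo e y) (Fo d y) {..<d x}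
      (\<lambda>j. Fm f y * (Fm (phiX X d x j) y * E x y * Fm (piX X d x j) y)))"
      by (subst msumS_Sigma[OF fin fins(1)], simp)
    also have "\<dots> = msumS (Fo e y) (Fo d y) X (\<lambda>x. msumS (Fo e y) (Fo d y) {..<d x}
      (\<lambda>j. msumS (Fo e y) (Fo d y) {..<e x} (\<lambda>i. G x j i)))"
    proof (intro msumS_cong)
      fix x j assume x: "x \<in> X" and j: "j \<in> {..<d x}"
      note c1 = Fphi_car[OF d x, of j y] and c2 = Ec[OF x] and c3 = Fpi_car[OF d x, of j y]
      have ci: "Fm (phiX X e x i) y \<in> carrier_mat (Fo e y) (mm x y)" for i by (rule Fphi_car[OF e x])
      have "Fm f y * (Fm (phiX X d x j) y * E x y * Fm (piX X d x j) y) = ((Fm f y * Fm (phiX X d x j) y) * E x y) * Fm (piX X d x j) y"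
        using cD[OF Ff] cD[OF c1] cD[OF c2] cD[OF c3] by (simp add: assoc_dim)
      also have "\<dots> = (msumS (Fo e y) (mm x y) {..<e x} (\<lambda>i. f x $$ (i,j) \<cdot>\<^sub>m Fm (phiX X e x i) y) * E x y) * Fm (piX X d x j) y"
        using j by (simp add: F_f_phi[OF d e f x _ y])
      also have "\<dots> = msumS (Fo e y) (Fo d y) {..<e x} (\<lambda>i. ((f x $$ (i,j) \<cdot>\<^sub>m Fm (phiX X e x i) y) * E x y) * Fm (piX X d x j) y)"
        by (subst mult_msumS_right[OF c2], simp add: ci smult_carrier_mat, subst mult_msumS_right[OF c3], auto intro!: mult_carrier_mat ci c2 smult_carrier_mat)
      also have "\<dots> = msumS (Fo e y) (Fo d y) {..<e x} (\<lambda>i. G x j i)"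
        unfolding G_def
        by (rule msumS_cong, insert cD[OF c2] cD[OF c3] cD[OF ci], simp add: smult_mult_dim assoc_dim)
      finally show "Fm f y * (Fm (phiX X d x j) y * E x y * Fm (piX X d x j) y) = msumS (Fo e y) (Fo d y) {..<e x} (\<lambda>i. G x j i)" .
    qed
    finally show ?thesis .
  qed
  have R: "thE E e y * Fm f y = msumS (Fo e y) (Fo d y) X (\<lambda>x. msumS (Fo e y) (Fo d y) {..<e x}
      (\<lambda>i. msumS (Fo e y) (Fo d y) {..<d x} (\<lambda>j. G x j i)))"
  proof -
    have "thE E e y * Fm f y = msumS (Fo e y) (Fo d y) (Sigma X (\<lambda>x. {..<e x}))
      (\<lambda>p. (case p of (x,i) \<Rightarrow> Fm (phiX X e x i) y * E x y * Fm (piX X e x i) y) * Fm f y)"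
      unfolding thE_at[OF y]
      by (rule mult_msumS_right[OF Ff], auto intro!: mult_carrier_mat Fphi_car[OF e] Fpi_car[OF e] Ec)
    also have "\<dots> = msumS (Fo e y) (Fo d y) X (\<lambda>x. msumS (Fo e y) (Fo d y) {..<e x}
      (\<lambda>i. (Fm (phiX X e x i) y * E x y * Fm (piX X e x i) y) * Fm f y))"
      by (subst msumS_Sigma[OF fin fins(2)], simp)
    also have "\<dots> = msumS (Fo e y) (Fo d y) X (\<lambda>x. msumS (Fo e y) (Fo d y) {..<e x}
      (\<lambda>i. msumS (Fo e y) (Fo d y) {..<d x} (\<lambda>j. G x j i)))"
    proof (intro msumS_cong)
      fix x i assume x: "x \<in> X" and i: "i \<in> {..<e x}"
      note c1 = Fphi_car[OF e x, of i y] and c2 = Ec[OF x] and c3 = Fpi_car[OF e x, of i y]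
      have cj: "Fm (piX X d x j) y \<in> carrier_mat (mm x y) (Fo d y)" for j by (rule Fpi_car[OF d x])
      have "(Fm (phiX X e x i) y * E x y * Fm (piX X e x i) y) * Fm f y = (Fm (phiX X e x i) y * E x y) * (Fm (piX X e x i) y * Fm f y)"
        using cD[OF Ff] cD[OF c1] cD[OF c2] cD[OF c3] by (simp add: assoc_dim)
      also have "\<dots> = (Fm (phiX X e x i) y * E x y) * msumS (mm x y) (Fo d y) {..<d x} (\<lambda>j. f x $$ (i,j) \<cdot>\<^sub>m Fm (piX X d x j) y)"
        using i by (simp add: F_pi_f[OF d e f x _ y])
      also have "\<dots> = msumS (Fo e y) (Fo d y) {..<d x} (\<lambda>j. (Fm (phiX X e x i) y * E x y) * (f x $$ (i,j) \<cdot>\<^sub>m Fm (piX X d x j) y))"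
        by (rule mult_msumS_left[OF mult_carrier_mat[OF c1 c2]], simp add: cj)
      also have "\<dots> = msumS (Fo e y) (Fo d y) {..<d x} (\<lambda>j. G x j i)"
        unfolding G_def
        by (rule msumS_cong, insert cD[OF c1] cD[OF c2] cD[OF cj], simp add: mult_smult_dim)
      finally show "(Fm (phiX X e x i) y * E x y * Fm (piX X e x i) y) * Fm f y = msumS (Fo e y) (Fo d y) {..<d x} (\<lambda>j. G x j i)" .
    qed
    finally show ?thesis .
  qed
  show ?thesis unfolding L R by (rule msumS_cong, rule msumS_swap)
qed


lemma ext_Y2: "(\<And>y. y \<in> Y \<Longrightarrow> f y = g y) \<Longrightarrow> (\<And>y. y \<notin> Y \<Longrightarrow> f y = g y) \<Longrightarrow> f = g"
  by (rule ext, case_tac "x \<in> Y", auto)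

lemma thE_s: assumes fin: "finite X" and Ec: "\<And>x y. x \<in> X \<Longrightarrow> y \<in> Y \<Longrightarrow> E x y \<in> carrier_mat (mm x y) (mm x y)"
  and Eeq: "\<And>g x y. g < n \<Longrightarrow> x \<in> X \<Longrightarrow> y \<in> Y \<Longrightarrow>
      s g (simple_obj x) y * E (aX g x) y = E x (aY (ginv n g) y) * s g (simple_obj x) y"
  and g: "g < n" and d: "d \<in> objs X" and y: "y \<in> Y"
  shows "s g d y * thE E (gobj n X aX g d) y = thE E d (aY (ginv n g) y) * s g d y"
proof -
  let ?gd = "gobj n X aX g d" and ?y' = "aY (ginv n g) y"
  have gd: "?gd \<in> objs X" by (rule gobj_objs[OF n1 GX])
  have y': "?y' \<in> Y" by (rule act_inv_in[OF n1 GY g y])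
  note S = s_at(1)[OF g d y]
  have "s g d y * thE E ?gd y = msumS (Fo d ?y') (Fo ?gd y) (Sigma X (\<lambda>x. {..<?gd x}))
      (\<lambda>p. s g d y * (case p of (x,j) \<Rightarrow> Fm (phiX X ?gd x j) y * E x y * Fm (piX X ?gd x j) y))"
    unfolding thE_at[OF y]
    by (rule mult_msumS_left[OF S], auto intro!: mult_carrier_mat Fphi_car[OF gd] Fpi_car[OF gd] Ec y)
  also have "\<dots> = msumS (Fo d ?y') (Fo ?gd y) (Sigma X (\<lambda>x. {..<d x}))
      ((\<lambda>p. s g d y * (case p of (x,j) \<Rightarrow> Fm (phiX X ?gd x j) y * E x y * Fm (piX X ?gd x j) y)) \<circ> (\<lambda>(x,j). (aX g x, j)))"
    unfolding Sigma_gobj[OF n1 GX g] by (rule msumS_reindex[OF inj_Sigma_act[OF n1 GX g]])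
  also have "\<dots> = msumS (Fo d ?y') (Fo ?gd y) (Sigma X (\<lambda>x. {..<d x}))
      (\<lambda>p. (case p of (x,j) \<Rightarrow> Fm (phiX X d x j) ?y' * E x ?y' * Fm (piX X d x j) ?y') * s g d y)"
  proof (rule msumS_cong)
    fix p assume p: "p \<in> Sigma X (\<lambda>x. {..<d x})"
    then obtain x j where pxj: "p = (x,j)" and x: "x \<in> X" by auto
    let ?P = "phiX X d x j" and ?Q = "piX X d x j" and ?dl = "simple_obj x"
    have dl: "?dl \<in> objs X" by (rule simple_obj_objs[OF x])
    have gx: "aX g x \<in> X" by (rule act_in[OF n1 GX g x])
    have P: "?P \<in> homs X ?dl d" and Q: "?Q \<in> homs X d ?dl" by (rule phiX_homs[OF x], rule piX_homs[OF x])
    have gdl: "gobj n X aX g ?dl = simple_obj (aX g x)" by (rule gobj_simple[OF n1 GX g x])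
    have gP: "phiX X ?gd (aX g x) j = gmor n X aX g ?P" by (rule gmor_phiX[OF n1 GX g x, symmetric])
    have gQ: "piX X ?gd (aX g x) j = gmor n X aX g ?Q" by (rule gmor_piX[OF n1 GX g x, symmetric])
    have Sd: "s g ?dl y \<in> carrier_mat (mm x ?y') (mm (aX g x) y)"
      using s_at(1)[OF g dl y] unfolding gdl mm_def .
    have FgP: "Fm (gmor n X aX g ?P) y \<in> carrier_mat (Fo ?gd y) (mm (aX g x) y)"
      using FmC[OF simple_obj_objs[OF gx] gd gmor_homs[OF n1 GX g P, unfolded gdl], of y] unfolding mm_def .
    have FgQ: "Fm (gmor n X aX g ?Q) y \<in> carrier_mat (mm (aX g x) y) (Fo ?gd y)"
      using FmC[OF gd simple_obj_objs[OF gx] gmor_homs[OF n1 GX g Q, unfolded gdl], of y] unfolding mm_def .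
    note FP = Fphi_car[OF d x, of j ?y'] and FQ = Fpi_car[OF d x, of j ?y']
    note E1 = Ec[OF gx y] and E2 = Ec[OF x y']
    have n1': "Fm ?P ?y' * s g ?dl y = s g d y * Fm (gmor n X aX g ?P) y"
      using fun_cong[OF s_nat[OF g dl d P], of y] unfolding cmp_at[OF y] gmor_at[OF n1 GY y] .
    have n2': "Fm ?Q ?y' * s g d y = s g ?dl y * Fm (gmor n X aX g ?Q) y"
      using fun_cong[OF s_nat[OF g d dl Q], of y] unfolding cmp_at[OF y] gmor_at[OF n1 GY y] .
    have e': "s g ?dl y * E (aX g x) y = E x ?y' * s g ?dl y" by (rule Eeq[OF g x y])
    have "s g d y * (Fm (gmor n X aX g ?P) y * E (aX g x) y * Fm (gmor n X aX g ?Q) y)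
        = ((s g d y * Fm (gmor n X aX g ?P) y) * E (aX g x) y) * Fm (gmor n X aX g ?Q) y"
      using cD[OF S] cD[OF FgP] cD[OF E1] cD[OF FgQ] by (simp add: assoc_dim)
    also have "\<dots> = ((Fm ?P ?y' * s g ?dl y) * E (aX g x) y) * Fm (gmor n X aX g ?Q) y" unfolding n1' ..
    also have "\<dots> = Fm ?P ?y' * (s g ?dl y * E (aX g x) y) * Fm (gmor n X aX g ?Q) y"
      using cD[OF FP] cD[OF Sd] cD[OF E1] by (simp add: assoc_dim)
    also have "\<dots> = Fm ?P ?y' * (E x ?y' * s g ?dl y) * Fm (gmor n X aX g ?Q) y" unfolding e' ..
    also have "\<dots> = Fm ?P ?y' * E x ?y' * (s g ?dl y * Fm (gmor n X aX g ?Q) y)"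
      using cD[OF FP] cD[OF Sd] cD[OF E2] cD[OF FgQ] by (simp add: assoc_dim)
    also have "\<dots> = Fm ?P ?y' * E x ?y' * (Fm ?Q ?y' * s g d y)" unfolding n2' ..
    also have "\<dots> = (Fm ?P ?y' * E x ?y' * Fm ?Q ?y') * s g d y"
      using cD[OF FP] cD[OF FQ] cD[OF E2] cD[OF S] by (simp add: assoc_dim)
    finally show "((\<lambda>p. s g d y * (case p of (x,j) \<Rightarrow> Fm (phiX X ?gd x j) y * E x y * Fm (piX X ?gd x j) y)) \<circ> (\<lambda>(x,j). (aX g x, j))) p
       = (case p of (x,j) \<Rightarrow> Fm (phiX X d x j) ?y' * E x ?y' * Fm (piX X d x j) ?y') * s g d y"
      unfolding pxj gP[symmetric] gQ[symmetric] by simp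
  qed
  also have "\<dots> = thE E d ?y' * s g d y"
    unfolding thE_at[OF y']
    by (rule mult_msumS_right[symmetric, OF S], auto intro!: mult_carrier_mat Fphi_car[OF d] Fpi_car[OF d] Ec y')
  finally show ?thesis .
qed

lemma thE_mor: assumes fin: "finite X" and Ec: "\<And>x y. x \<in> X \<Longrightarrow> y \<in> Y \<Longrightarrow> E x y \<in> carrier_mat (mm x y) (mm x y)"
  and Eeq: "\<And>g x y. g < n \<Longrightarrow> x \<in> X \<Longrightarrow> y \<in> Y \<Longrightarrow>
      s g (simple_obj x) y * E (aX g x) y = E x (aY (ginv n g) y) * s g (simple_obj x) y"
  shows "mf_mor n X aX Y aY (Fo, Fm, s) (Fo, Fm, s) (thE E)"
  unfolding mf_mor_def prod.case
proof (intro conjI ballI allI impI)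
  fix d assume d: "d \<in> objs X"
  show "thE E d \<in> homs Y (Fo d) (Fo d)" by (rule homsI, auto simp: thE_def)
next
  fix d e and f :: "'x \<Rightarrow> 'a mat" assume d: "d \<in> objs X" and e: "e \<in> objs X" and f: "f \<in> homs X d e"
  show "cmp Y (Fm f) (thE E d) = cmp Y (thE E e) (Fm f)"
    by (rule ext_Y2, unfold cmp_at, rule thE_nat[OF fin Ec d e f], auto simp: cmp_def)
next
  fix g d assume g: "g < n" and d: "d \<in> objs X"
  show "cmp Y (s g d) (thE E (gobj n X aX g d)) = cmp Y (gmor n Y aY g (thE E d)) (s g d)"
    by (rule ext_Y2, unfold cmp_at gmor_at[OF n1 GY], rule thE_s[OF fin Ec Eeq g d], auto simp: cmp_def)
qed

lemma thE_simple: assumes x: "x \<in> X" and y: "y \<in> Y" and Ec: "E x y \<in> carrier_mat (mm x y) (mm x y)"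
  shows "thE E (simple_obj x) y = E x y"
proof -
  have sx: "simple_obj x \<in> objs X" by (rule simple_obj_objs[OF x])
  have F1: "Fm (idm X (simple_obj x)) y = 1\<^sub>m (mm x y)"
    unfolding F_idm[OF sx] idm_at[OF y] mm_def ..
  have h: "Fm (phiX X (simple_obj x) x 0) y * E x y * Fm (piX X (simple_obj x) x 0) y = E x y"
    unfolding phi_simple[OF x] pi_simple[OF x] F1 using Ec by simp
  show ?thesis unfolding thE_at[OF y] Sigma_simple[OF x]
    by (subst msumS_single, unfold prod.case h, insert Ec, auto simp: mm_def)
qed

lemma decompF: assumes fin: "finite X" and d: "d \<in> objs X" and y: "y \<in> Y"
  shows "1\<^sub>m (Fo d y) = msumS (Fo d y) (Fo d y) (Sigma X (\<lambda>x. {..<d x})) (\<lambda>(x,j). Fm (phiX X d x j) y * Fm (piX X d x j) y)"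
proof -
  have fS: "finite (Sigma X (\<lambda>x. {..<d x}))" using fin by auto
  have hm: "\<And>p. p \<in> Sigma X (\<lambda>x. {..<d x}) \<Longrightarrow> (case p of (x,j) \<Rightarrow> cmp X (phiX X d x j) (piX X d x j)) \<in> homs X d d"
    by (auto intro!: cmp_homs phiX_homs piX_homs)
  have "1\<^sub>m (Fo d y) = Fm (idm X d) y" unfolding F_idm[OF d] idm_at[OF y] ..
  also have "\<dots> = msumS (Fo d y) (Fo d y) (Sigma X (\<lambda>x. {..<d x})) (\<lambda>p. Fm (case p of (x,j) \<Rightarrow> cmp X (phiX X d x j) (piX X d x j)) y)"
    by (subst decomp_idm[OF fin d], subst F_hsumS[OF fS d d hm], simp_all add: hsumS_at[OF y])
  also have "\<dots> = msumS (Fo d y) (Fo d y) (Sigma X (\<lambda>x. {..<d x})) (\<lambda>(x,j). Fm (phiX X d x j) y * Fm (piX X d x j) y)"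
  proof (rule msumS_cong)
    fix p assume "p \<in> Sigma X (\<lambda>x. {..<d x})"
    then obtain x j where p: "p = (x,j)" and x: "x \<in> X" by auto
    show "Fm (case p of (x,j) \<Rightarrow> cmp X (phiX X d x j) (piX X d x j)) y = (case p of (x,j) \<Rightarrow> Fm (phiX X d x j) y * Fm (piX X d x j) y)"
      unfolding p prod.case F_cmp[OF d simple_obj_objs[OF x] d piX_homs[OF x] phiX_homs[OF x]] cmp_at[OF y] ..
  qed
  finally show ?thesis .
qed

end


lemma E0_exists:
  fixes P :: "'a::field mat"
  assumes ac: "alg_closed_field TYPE('a)" and P: "P \<in> carrier_mat m m" and m2: "2 \<le> m"
  shows "\<exists>E0 v. E0 \<in> carrier_mat m m \<and> E0 * P = P * E0 \<and> E0 \<noteq> 0\<^sub>m m m \<and>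
     v \<in> carrier_vec m \<and> v \<noteq> 0\<^sub>v m \<and> E0 *\<^sub>v v = 0\<^sub>v m"
proof -
  have "degree (char_poly P) = m" using degree_monic_char_poly[OF P] by simp
  hence "degree (char_poly P) \<ge> 1" using m2 by simp
  then obtain z where "poly (char_poly P) z = 0" using ac unfolding alg_closed_field_def by blast
  hence "eigenvalue P z" using eigenvalue_root_char_poly[OF P] by simp
  then obtain v where v: "v \<in> carrier_vec m" "v \<noteq> 0\<^sub>v m" "char_matrix P z *\<^sub>v v = 0\<^sub>v m"
    using eigenvalue_char_matrix[OF P] by blast
  have cm: "char_matrix P z = P + (-z) \<cdot>\<^sub>m 1\<^sub>m m" unfolding char_matrix_def using P by simp
  show ?thesis
  proof (cases "char_matrix P z = 0\<^sub>m m m")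
    case False
    have I: "(-z) \<cdot>\<^sub>m 1\<^sub>m m \<in> carrier_mat m m" by simp
    have "char_matrix P z * P = P * P + (-z) \<cdot>\<^sub>m P"
      unfolding cm using add_mult_distrib_mat[OF P I P] P by (simp add: smult_mult_dim)
    also have "\<dots> = P * char_matrix P z"
      unfolding cm using mult_add_distrib_mat[OF P P I] P by (simp add: mult_smult_dim)
    finally have "char_matrix P z * P = P * char_matrix P z" .
    thus ?thesis using False v P by (intro exI[of _ "char_matrix P z"] exI[of _ v], auto)
  next
    case True
    have Pz: "P = z \<cdot>\<^sub>m 1\<^sub>m m"
    proof (rule eq_matI)
      fix i j assume ij: "i < dim_row (z \<cdot>\<^sub>m 1\<^sub>m m)" "j < dim_col (z \<cdot>\<^sub>m 1\<^sub>m m)"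
      have "char_matrix P z $$ (i,j) = 0" using True ij by simp
      hence "P $$ (i,j) + (-z) * (if i = j then 1 else 0) = 0" unfolding cm using ij P by simp
      thus "P $$ (i,j) = (z \<cdot>\<^sub>m 1\<^sub>m m) $$ (i,j)" using ij by (auto split: if_splits simp: algebra_simps)
    qed (insert P, auto)
    define E0 :: "'a mat" where "E0 = mat m m (\<lambda>(i,j). if i = 0 \<and> j = 0 then 1 else 0)"
    have E0c: "E0 \<in> carrier_mat m m" unfolding E0_def by simp
    have com: "E0 * P = P * E0" unfolding Pz using E0c by (simp add: mult_smult_dim smult_mult_dim)
    have nz: "E0 \<noteq> 0\<^sub>m m m"
    proof
      assume "E0 = 0\<^sub>m m m"
      hence "E0 $$ (0,0) = 0\<^sub>m m m $$ (0,0)" by simp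
      thus False using m2 unfolding E0_def by simp
    qed
    have u: "unit_vec m 1 \<in> carrier_vec m" by simp
    have unz: "unit_vec m 1 \<noteq> (0\<^sub>v m :: 'a vec)"
    proof
      assume "unit_vec m 1 = (0\<^sub>v m :: 'a vec)"
      hence "(unit_vec m 1 :: 'a vec) $ 1 = (0\<^sub>v m :: 'a vec) $ 1" by simp
      thus False using m2 by simp
    qed
    have "E0 *\<^sub>v unit_vec m 1 = 0\<^sub>v m"
    proof (rule eq_vecI)
      fix i assume i: "i < dim_vec (0\<^sub>v m :: 'a vec)"
      have "(E0 *\<^sub>v unit_vec m 1) $ i = row E0 i \<bullet> unit_vec m 1" using i E0c by simp
      also have "\<dots> = row E0 i $ 1" by (rule scalar_prod_right_unit, insert i E0c m2, auto)
      also have "\<dots> = 0" using i m2 unfolding E0_def by simp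
      finally show "(E0 *\<^sub>v unit_vec m 1) $ i = 0\<^sub>v m $ i" using i by simp
    qed (insert E0c, auto)
    thus ?thesis using E0c com nz u unz by blast
  qed
qed

lemma pow_comm: assumes E: "E \<in> carrier_mat m m" and P: "P \<in> carrier_mat m m" and c: "E * P = P * E"
  shows "E * (P ^\<^sub>m j) = (P ^\<^sub>m j) * E"
proof (induction j)
  case 0 thus ?case using E P by simp
next
  case (Suc j)
  have Pj: "P ^\<^sub>m j \<in> carrier_mat m m" using P by simp
  have "E * (P ^\<^sub>m Suc j) = (E * P ^\<^sub>m j) * P" using assoc_mult_mat[OF E Pj P] by simp
  also have "\<dots> = P ^\<^sub>m j * (E * P)" unfolding Suc using assoc_mult_mat[OF Pj E P] by simp
  also have "\<dots> = (P ^\<^sub>m Suc j) * E" unfolding c using assoc_mult_mat[OF Pj P E] by simp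
  finally show ?case .
qed

lemma spow_comm: fixes E P :: "'a::field mat" assumes E: "E \<in> carrier_mat m m" and P: "P \<in> carrier_mat m m" and c: "E * P = P * E"
  shows "E * (k \<cdot>\<^sub>m P ^\<^sub>m j) = (k \<cdot>\<^sub>m P ^\<^sub>m j) * E"
proof -
  have Pj: "P ^\<^sub>m j \<in> carrier_mat m m" using P by simp
  show ?thesis unfolding mult_smult_distrib[OF E Pj] mult_smult_assoc_mat[OF Pj E] pow_comm[OF E P c] ..
qed

lemma mod_inv_lemma: "1 \<le> n \<Longrightarrow> a < n \<Longrightarrow> m < n \<Longrightarrow> (a + (ginv n a + m) mod n) mod n = m"
proof -
  assume n1: "1 \<le> n" and a: "a < n" and m: "m < n"
  have "(a + (ginv n a + m) mod n) mod n = (a + (ginv n a + m)) mod n" by (simp add: mod_add_right_eq)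
  also have "\<dots> = ((a + ginv n a) mod n + m) mod n" by (simp add: mod_add_left_eq add.assoc)
  also have "\<dots> = m" using ginv_add_mod2[OF n1 a] m by simp
  finally show ?thesis .
qed

context MFS
begin

lemma schurE:
  assumes SM: "simple_mf n X aX PX Y aY PY (Fo, Fm, s)" and fin: "finite X"
  and Ec: "\<And>x y. x \<in> X \<Longrightarrow> y \<in> Y \<Longrightarrow> E x y \<in> carrier_mat (mm x y) (mm x y)"
  and Eeq: "\<And>g x y. g < n \<Longrightarrow> x \<in> X \<Longrightarrow> y \<in> Y \<Longrightarrow>
      s g (simple_obj x) y * E (aX g x) y = E x (aY (ginv n g) y) * s g (simple_obj x) y"
  shows "(\<forall>x\<in>X. \<forall>y\<in>Y. E x y = 0\<^sub>m (mm x y) (mm x y)) \<or>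
    (\<forall>x\<in>X. \<forall>y\<in>Y. \<forall>c N. N \<in> carrier_mat (mm x y) c \<longrightarrow> E x y * N = 0\<^sub>m (mm x y) c \<longrightarrow> N = 0\<^sub>m (mm x y) c)"
proof -
  interpret T: MFT n X aX PX Y aY PY Fo Fm s "thE E"
    by (unfold_locales; (rule n1 GX GY MF thE_mor[OF fin Ec Eeq])?)
  from T.schur[OF SM] show ?thesis
  proof
    assume z: "\<forall>d\<in>objs X. \<forall>y\<in>Y. thE E d y = 0\<^sub>m (Fo d y) (Fo d y)"
    show ?thesis
    proof (rule disjI1, intro ballI)
      fix x y assume x: "x \<in> X" and y: "y \<in> Y"
      have "thE E (simple_obj x) y = 0\<^sub>m (mm x y) (mm x y)" using z simple_obj_objs[OF x] y unfolding mm_def by blast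
      thus "E x y = 0\<^sub>m (mm x y) (mm x y)" using thE_simple[of x y E, OF x y Ec[OF x y]] by simp
    qed
  next
    assume i: "\<forall>d\<in>objs X. \<forall>y\<in>Y. \<forall>c N. N \<in> carrier_mat (Fo d y) c \<longrightarrow> thE E d y * N = 0\<^sub>m (Fo d y) c \<longrightarrow> N = 0\<^sub>m (Fo d y) c"
    show ?thesis
    proof (rule disjI2, intro ballI allI impI)
      fix x y c N assume x: "x \<in> X" and y: "y \<in> Y" and N: "N \<in> carrier_mat (mm x y) c" and N0: "E x y * N = 0\<^sub>m (mm x y) c"
      have "thE E (simple_obj x) y * N = 0\<^sub>m (mm x y) c" using N0 thE_simple[of x y E, OF x y Ec[OF x y]] by simp
      thus "N = 0\<^sub>m (mm x y) c" using i simple_obj_objs[OF x] y N unfolding mm_def by blast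
    qed
  qed
qed

lemma nonempty:
  assumes fin: "finite X" and nz: "\<not> mf_zero X (Fo, Fm, s)"
  shows "\<exists>x\<in>X. \<exists>y\<in>Y. mm x y \<noteq> 0"
proof (rule ccontr)
  assume "\<not> (\<exists>x\<in>X. \<exists>y\<in>Y. mm x y \<noteq> 0)"
  hence z: "\<And>x y. x \<in> X \<Longrightarrow> y \<in> Y \<Longrightarrow> mm x y = 0" by blast
  from nz obtain d y where d: "d \<in> objs X" and dy: "Fo d y \<noteq> 0" unfolding mf_zero_def by auto
  have y: "y \<in> Y" using F_obj[OF d] dy unfolding objs_def by auto
  have "1\<^sub>m (Fo d y) = msumS (Fo d y) (Fo d y) (Sigma X (\<lambda>x. {..<d x})) (\<lambda>(x,j). Fm (phiX X d x j) y * Fm (piX X d x j) y)"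
    by (rule decompF[OF fin d y])
  also have "\<dots> = 0\<^sub>m (Fo d y) (Fo d y)"
  proof (rule msumS_zero)
    fix p assume "p \<in> Sigma X (\<lambda>x. {..<d x})"
    then obtain x j where p: "p = (x,j)" and x: "x \<in> X" by auto
    show "(case p of (x,j) \<Rightarrow> Fm (phiX X d x j) y * Fm (piX X d x j) y) = 0\<^sub>m (Fo d y) (Fo d y)"
      unfolding p prod.case
      by (rule mult_zero_dim0, insert Fphi_car[OF d x, of j y] Fpi_car[OF d x, of j y] z[OF x y], auto)
  qed
  finally have eq: "(1\<^sub>m (Fo d y) :: 'a mat) = 0\<^sub>m (Fo d y) (Fo d y)" .
  have "(1\<^sub>m (Fo d y) :: 'a mat) $$ (0,0) = 0\<^sub>m (Fo d y) (Fo d y) $$ (0,0)" unfolding eq ..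
  thus False using dy by simp
qed


definition "orb x0 y0 = {(aX a x0, aY a y0) | a. a < n}"

lemma orb_shift: assumes g: "g < n" and x: "x \<in> X" and y: "y \<in> Y" and x0: "x0 \<in> X" and y0: "y0 \<in> Y"
  shows "(aX g x, y) \<in> orb x0 y0 \<longleftrightarrow> (x, aY (ginv n g) y) \<in> orb x0 y0"
proof
  assume "(aX g x, y) \<in> orb x0 y0"
  then obtain a where a: "a < n" and ax: "aX g x = aX a x0" and ay: "y = aY a y0" unfolding orb_def by auto
  let ?b = "(ginv n g + a) mod n"
  have b: "?b < n" using n1 by simp
  have gi: "ginv n g < n" by (rule ginv_lt[OF n1])
  have "aX ?b x0 = x" using act_comp[OF n1 GX gi a x0] ax[symmetric] act_inv1[OF n1 GX g x] by simp
  moreover have "aY ?b y0 = aY (ginv n g) y" using act_comp[OF n1 GY gi a y0] ay by simp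
  ultimately show "(x, aY (ginv n g) y) \<in> orb x0 y0" unfolding orb_def using b by force
next
  assume "(x, aY (ginv n g) y) \<in> orb x0 y0"
  then obtain b where b: "b < n" and bx: "x = aX b x0" and by': "aY (ginv n g) y = aY b y0" unfolding orb_def by auto
  let ?a = "(g + b) mod n"
  have a: "?a < n" using n1 by simp
  have "aX ?a x0 = aX g x" using act_comp[OF n1 GX g b x0] bx by simp
  moreover have "aY ?a y0 = y" using act_comp[OF n1 GY g b y0] by'[symmetric] act_inv2[OF n1 GY g y] by simp
  ultimately show "(aX g x, y) \<in> orb x0 y0" unfolding orb_def using a by force
qed

lemma orb_self: assumes "x0 \<in> X" "y0 \<in> Y" shows "(x0, y0) \<in> orb x0 y0"
proof -
  have "(x0, y0) = (aX 0 x0, aY 0 y0)" using act_0[OF n1 GX assms(1)] act_0[OF n1 GY assms(2)] by simp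
  thus ?thesis unfolding orb_def mem_Collect_eq using n1 by (intro exI[of _ 0], simp)
qed

lemma Tcar: "g < n \<Longrightarrow> x \<in> X \<Longrightarrow> y \<in> Y \<Longrightarrow>
    s g (simple_obj x) y \<in> carrier_mat (mm x (aY (ginv n g) y)) (mm (aX g x) y)"
  using s_at(1)[OF _ simple_obj_objs, of g x y] gobj_simple[OF n1 GX, of g x] unfolding mm_def by simp

lemma one_eq_zero: "(1\<^sub>m k :: 'a mat) = 0\<^sub>m k k \<Longrightarrow> k = 0"
proof (rule ccontr)
  assume eq: "(1\<^sub>m k :: 'a mat) = 0\<^sub>m k k" and k: "k \<noteq> 0"
  have "(1\<^sub>m k :: 'a mat) $$ (0,0) = 0\<^sub>m k k $$ (0,0)" unfolding eq ..
  thus False using k by simp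
qed

lemma orbit_support:
  assumes SM: "simple_mf n X aX PX Y aY PY (Fo, Fm, s)" and fin: "finite X"
    and x0: "x0 \<in> X" and y0: "y0 \<in> Y" and nz: "mm x0 y0 \<noteq> 0"
  shows "\<forall>x\<in>X. \<forall>y\<in>Y. (x,y) \<notin> orb x0 y0 \<longrightarrow> mm x y = 0"
proof -
  define E :: "'x \<Rightarrow> 'y \<Rightarrow> 'a mat" where "E x y = (if (x,y) \<in> orb x0 y0 then 1\<^sub>m (mm x y) else 0\<^sub>m (mm x y) (mm x y))" for x y
  have Ec: "E x y \<in> carrier_mat (mm x y) (mm x y)" for x y unfolding E_def by auto
  have Eeq: "s g (simple_obj x) y * E (aX g x) y = E x (aY (ginv n g) y) * s g (simple_obj x) y"
    if g: "g < n" and x: "x \<in> X" and y: "y \<in> Y" for g x y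
    using Tcar[OF g x y] orb_shift[OF g x y x0 y0] unfolding E_def by auto
  from schurE[OF SM fin Ec Eeq] show ?thesis
  proof
    assume "\<forall>x\<in>X. \<forall>y\<in>Y. E x y = 0\<^sub>m (mm x y) (mm x y)"
    hence "E x0 y0 = 0\<^sub>m (mm x0 y0) (mm x0 y0)" using x0 y0 by blast
    hence "mm x0 y0 = 0" unfolding E_def using orb_self[OF x0 y0] by (simp add: one_eq_zero)
    thus ?thesis using nz by simp
  next
    assume i: "\<forall>x\<in>X. \<forall>y\<in>Y. \<forall>c N. N \<in> carrier_mat (mm x y) c \<longrightarrow> E x y * N = 0\<^sub>m (mm x y) c \<longrightarrow> N = 0\<^sub>m (mm x y) c"
    show ?thesis
    proof (intro ballI impI)
      fix x y assume x: "x \<in> X" and y: "y \<in> Y" and no: "(x,y) \<notin> orb x0 y0"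
      have "E x y * 1\<^sub>m (mm x y) = 0\<^sub>m (mm x y) (mm x y)" unfolding E_def using no by simp
      hence "(1\<^sub>m (mm x y) :: 'a mat) = 0\<^sub>m (mm x y) (mm x y)"
        using i[rule_format, OF x y one_carrier_mat] by simp
      thus "mm x y = 0" by (rule one_eq_zero)
    qed
  qed
qed


lemma smult_one_mult2: "dim_row M = k \<Longrightarrow> (a \<cdot>\<^sub>m 1\<^sub>m k) * M = (a::'a) \<cdot>\<^sub>m M"
  by (subst smult_mult_dim, auto)

lemma mult_smult_one2: "dim_col M = k \<Longrightarrow> M * (a \<cdot>\<^sub>m 1\<^sub>m k) = (a::'a) \<cdot>\<^sub>m M"
  by (subst mult_smult_dim, auto)

definition "Tm g x y = s g (simple_obj x) y"
definition "Ti g x y = sinv g (simple_obj x) y"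

lemma Tm_car: "g < n \<Longrightarrow> x \<in> X \<Longrightarrow> y \<in> Y \<Longrightarrow>
    Tm g x y \<in> carrier_mat (mm x (aY (ginv n g) y)) (mm (aX g x) y)"
  unfolding Tm_def by (rule Tcar)

lemma Ti_props: assumes g: "g < n" and x: "x \<in> X" and y: "y \<in> Y"
  shows "Ti g x y \<in> carrier_mat (mm (aX g x) y) (mm x (aY (ginv n g) y))"
    "Ti g x y * Tm g x y = 1\<^sub>m (mm (aX g x) y)"
    "Tm g x y * Ti g x y = 1\<^sub>m (mm x (aY (ginv n g) y))"
  using s_at(2,3,4)[OF g simple_obj_objs[OF x] y] gobj_simple[OF n1 GX g x]
  unfolding Tm_def Ti_def mm_def by simp_all

lemma modc_simple: assumes g: "g < n" and h: "h < n" and x: "x \<in> X"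
  shows "modc n X aX PX g h (simple_obj x) = smultm X (PX g h (aX ((g + h) mod n) x)) (idm X (simple_obj (aX ((g + h) mod n) x)))"
proof -
  have gh: "(g + h) mod n < n" using n1 by simp
  have gs: "gobj n X aX ((g + h) mod n) (simple_obj x) = simple_obj (aX ((g + h) mod n) x)"
    by (rule gobj_simple[OF n1 GX gh x])
  show ?thesis unfolding modc_def smultm_def idm_def gs
    by (intro ext, auto simp: simple_obj_def intro!: eq_matI)
qed

lemma TR: assumes g: "g < n" and h: "h < n" and x: "x \<in> X" and y: "y \<in> Y"
  shows "PY g h y \<cdot>\<^sub>m Tm ((g + h) mod n) x y = PX g h (aX ((g + h) mod n) x) \<cdot>\<^sub>m (Tm h x (aY (ginv n g) y) * Tm g (aX h x) y)"
proof -
  let ?gh = "(g + h) mod n" and ?dl = "simple_obj x" and ?y' = "aY (ginv n g) y"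
  have gh: "?gh < n" using n1 by simp
  have dl: "?dl \<in> objs X" by (rule simple_obj_objs[OF x])
  have hx: "aX h x \<in> X" by (rule act_in[OF n1 GX h x])
  have ghx: "aX ?gh x \<in> X" by (rule act_in[OF n1 GX gh x])
  have y': "?y' \<in> Y" by (rule act_inv_in[OF n1 GY g y])
  have gb: "gobj n X aX h ?dl = simple_obj (aX h x)" by (rule gobj_simple[OF n1 GX h x])
  have ghxe: "aX g (aX h x) = aX ?gh x" using act_comp[OF n1 GX g h x] by simp
  note T1 = Tm_car[OF gh x y] and T2 = Tm_car[OF h x y'] and T3 = Tm_car[OF g hx y]
  have sdl: "simple_obj (aX ?gh x) \<in> objs X" by (rule simple_obj_objs[OF ghx])
  have FM: "Fm (modc n X aX PX g h ?dl) y = PX g h (aX ?gh x) \<cdot>\<^sub>m 1\<^sub>m (mm (aX ?gh x) y)"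
    unfolding modc_simple[OF g h x] F_smultm[OF sdl sdl idm_homs] F_idm[OF sdl] smultm_at[OF y] idm_at[OF y] mm_def ..
  have "cmp Y (modc n Y aY PY g h (Fo ?dl)) (s ?gh ?dl) y
        = cmp Y (cmp Y (gmor n Y aY g (s h ?dl)) (s g (gobj n X aX h ?dl))) (Fm (modc n X aX PX g h ?dl)) y"
    using s_mod[OF g h dl] by simp
  hence "(PY g h y \<cdot>\<^sub>m 1\<^sub>m (mm x (aY (ginv n ?gh) y))) * Tm ?gh x y
      = (Tm h x ?y' * Tm g (aX h x) y) * (PX g h (aX ?gh x) \<cdot>\<^sub>m 1\<^sub>m (mm (aX ?gh x) y))"
    unfolding cmp_at[OF y] gmor_at[OF n1 GY y] FM gb using y
    by (simp add: modc_def gobj_at[OF n1 GY] Tm_def mm_def)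
  thus ?thesis using cD[OF T1] cD[OF T2] cD[OF T3] ghxe
    by (simp add: smult_one_mult2 mult_smult_one2)
qed

lemma T0: assumes x: "x \<in> X" and y: "y \<in> Y" and PXn: "PX 0 0 x = 1" and PYn: "PY 0 0 y = 1"
  shows "Tm 0 x y = 1\<^sub>m (mm x y)"
proof -
  have n0: "0 < n" using n1 by simp
  have gi: "ginv n 0 = 0" unfolding ginv_def by simp
  have a0: "aX 0 x = x" by (rule act_0[OF n1 GX x])
  have b0: "aY 0 y = y" by (rule act_0[OF n1 GY y])
  note T = Tm_car[OF n0 x y, unfolded gi a0 b0]
  note I = Ti_props[OF n0 x y, unfolded gi a0 b0]
  have one_sm: "1 \<cdot>\<^sub>m A = (A :: 'a mat)" for A by (rule eq_matI, auto)
  have "Tm 0 x y = Tm 0 x y * Tm 0 x y"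
    using TR[OF n0 n0 x y] unfolding gi b0 PYn using n0 a0 PXn by (simp add: one_sm)
  hence "Ti 0 x y * Tm 0 x y = Ti 0 x y * (Tm 0 x y * Tm 0 x y)" by simp
  also have "\<dots> = (Ti 0 x y * Tm 0 x y) * Tm 0 x y" using assoc_mult_mat[OF I(1) T T] by simp
  finally show ?thesis using I(2) T by simp
qed


lemma smult_smult_mat2: "a \<cdot>\<^sub>m (b \<cdot>\<^sub>m A) = (a * b :: 'a) \<cdot>\<^sub>m A"
  by (rule eq_matI, auto)

lemma smult_cancel2: assumes "(a::'a) \<noteq> 0" and "a \<cdot>\<^sub>m A = B" shows "A = inverse a \<cdot>\<^sub>m B"
proof -
  have "inverse a \<cdot>\<^sub>m B = inverse a \<cdot>\<^sub>m (a \<cdot>\<^sub>m A)" using assms(2) by simp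
  also have "\<dots> = A" using assms(1) by (intro eq_matI, auto)
  finally show ?thesis by simp
qed

lemma stab_pow:
  assumes x1: "x1 \<in> X" and y1: "y1 \<in> Y"
    and PXnz: "\<And>g h x. g < n \<Longrightarrow> h < n \<Longrightarrow> x \<in> X \<Longrightarrow> PX g h x \<noteq> 0"
    and PYnz: "\<And>g h y. g < n \<Longrightarrow> h < n \<Longrightarrow> y \<in> Y \<Longrightarrow> PY g h y \<noteq> 0"
    and PX00: "\<And>x. x \<in> X \<Longrightarrow> PX 0 0 x = 1" and PY00: "\<And>y. y \<in> Y \<Longrightarrow> PY 0 0 y = 1"
  shows "\<exists>h0. h0 < n \<and> aX h0 x1 = x1 \<and> aY h0 y1 = y1 \<and>
     (\<forall>k. k < n \<longrightarrow> aX k x1 = x1 \<longrightarrow> aY k y1 = y1 \<longrightarrow> (\<exists>c j. Tm k x1 y1 = c \<cdot>\<^sub>m (Tm h0 x1 y1 ^\<^sub>m j)))"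
proof -
  define St where "St k \<longleftrightarrow> k < n \<and> aX k x1 = x1 \<and> aY k y1 = y1" for k
  have n0: "0 < n" using n1 by simp
  have St0: "St 0" unfolding St_def using n0 act_0[OF n1 GX x1] act_0[OF n1 GY y1] by simp
  have yinv: "aY (ginv n k) y1 = y1" if "St k" for k
    using act_inv1[OF n1 GY _ y1, of k] that unfolding St_def by simp
  have Tc: "Tm k x1 y1 \<in> carrier_mat (mm x1 y1) (mm x1 y1)" if "St k" for k
    using Tm_car[of k x1 y1] that x1 y1 yinv[OF that] unfolding St_def by simp
  have T00: "Tm 0 x1 y1 = 1\<^sub>m (mm x1 y1)" by (rule T0[OF x1 y1 PX00[OF x1] PY00[OF y1]])
  show ?thesis
  proof (cases "\<exists>h. 0 < h \<and> St h")
    case False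
    have "\<exists>c j. Tm k x1 y1 = c \<cdot>\<^sub>m (Tm 0 x1 y1 ^\<^sub>m j)" if "St k" for k
    proof -
      have k0: "k = 0" using False that by auto
      have "Tm k x1 y1 = 1 \<cdot>\<^sub>m (Tm 0 x1 y1 ^\<^sub>m 0)" unfolding k0 T00 by (rule eq_matI, auto)
      thus ?thesis by blast
    qed
    thus ?thesis using St0 unfolding St_def by blast
  next
    case True
    define h0 where "h0 = (LEAST h. 0 < h \<and> St h)"
    have h0: "0 < h0 \<and> St h0" unfolding h0_def using LeastI_ex[OF True] .
    have hmin: "\<not> St h" if "0 < h" "h < h0" for h using not_less_Least[of h "\<lambda>h. 0 < h \<and> St h"] that unfolding h0_def by auto
    have h0n: "h0 < n" using h0 unfolding St_def by simp
    let ?P = "Tm h0 x1 y1"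
    have Pc: "?P \<in> carrier_mat (mm x1 y1) (mm x1 y1)" using Tc h0 by blast
    have claim: "q * h0 < n \<longrightarrow> St (q * h0) \<and> (\<exists>c. Tm (q * h0) x1 y1 = c \<cdot>\<^sub>m (?P ^\<^sub>m q))" for q
    proof (induction q)
      case 0
      have "Tm (0 * h0) x1 y1 = 1 \<cdot>\<^sub>m (?P ^\<^sub>m 0)" using T00 Pc by (intro eq_matI, auto)
      thus ?case using St0 by auto
    next
      case (Suc q)
      show ?case
      proof
        assume lt: "Suc q * h0 < n"
        let ?k = "q * h0"
        have kn: "?k < n" using lt by (simp add: order.strict_trans1)
        from Suc.IH kn obtain c where Sk: "St ?k" and Tk: "Tm ?k x1 y1 = c \<cdot>\<^sub>m (?P ^\<^sub>m q)" by auto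
        have md: "(h0 + ?k) mod n = Suc q * h0" using lt by simp
        have ax: "aX ?k x1 = x1" and ay: "aY ?k y1 = y1" using Sk unfolding St_def by auto
        have St': "St (Suc q * h0)" unfolding St_def
          using lt act_comp[OF n1 GX h0n kn x1] act_comp[OF n1 GY h0n kn y1] ax ay h0 md
          unfolding St_def by simp
        have "PY h0 ?k y1 \<cdot>\<^sub>m Tm (Suc q * h0) x1 y1 = PX h0 ?k (aX (Suc q * h0) x1) \<cdot>\<^sub>m (Tm ?k x1 y1 * ?P)"
          using TR[OF h0n kn x1 y1] unfolding md yinv[OF conjunct2[OF h0]] ax .
        also have "\<dots> = (PX h0 ?k (aX (Suc q * h0) x1) * c) \<cdot>\<^sub>m (?P ^\<^sub>m Suc q)"
          unfolding Tk using Pc by (simp add: smult_mult_dim smult_smult_mat2)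
        finally have "Tm (Suc q * h0) x1 y1 = inverse (PY h0 ?k y1) \<cdot>\<^sub>m ((PX h0 ?k (aX (Suc q * h0) x1) * c) \<cdot>\<^sub>m (?P ^\<^sub>m Suc q))"
          by (rule smult_cancel2[OF PYnz[OF h0n kn y1]])
        thus "St (Suc q * h0) \<and> (\<exists>c. Tm (Suc q * h0) x1 y1 = c \<cdot>\<^sub>m (?P ^\<^sub>m Suc q))"
          using St' by (auto simp: smult_smult_mat2)
      qed
    qed
    have "\<exists>c j. Tm k x1 y1 = c \<cdot>\<^sub>m (?P ^\<^sub>m j)" if Sk: "St k" for k
    proof -
      define q where "q = k div h0"
      define r where "r = k mod h0"
      have kqr: "k = r + q * h0" unfolding q_def r_def by simp
      have kn: "k < n" using Sk unfolding St_def by simp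
      have qn: "q * h0 < n" using kqr kn by simp
      from claim[of q] qn have Sq: "St (q * h0)" and Tq: "\<exists>c. Tm (q * h0) x1 y1 = c \<cdot>\<^sub>m (?P ^\<^sub>m q)" by auto
      have rh: "r < h0" unfolding r_def using h0 by simp
      have rn: "r < n" using rh h0n by simp
      have md: "(r + q * h0) mod n = k" using kqr kn by simp
      have "aX k x1 = aX r (aX (q * h0) x1)" using act_comp[OF n1 GX rn qn x1] md by simp
      hence ax: "aX r x1 = x1" using Sq Sk unfolding St_def by simp
      have "aY k y1 = aY r (aY (q * h0) y1)" using act_comp[OF n1 GY rn qn y1] md by simp
      hence ay: "aY r y1 = y1" using Sq Sk unfolding St_def by simp
      have "r = 0" using hmin[of r] rh ax ay rn unfolding St_def by auto
      hence "k = q * h0" using kqr by simp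
      thus ?thesis using Tq by blast
    qed
    thus ?thesis using h0 unfolding St_def by blast
  qed
qed


lemma orb_choice: assumes "(x,y) \<in> orb x1 y1"
  shows "(SOME a. a < n \<and> x = aX a x1 \<and> y = aY a y1) < n \<and>
         x = aX (SOME a. a < n \<and> x = aX a x1 \<and> y = aY a y1) x1 \<and>
         y = aY (SOME a. a < n \<and> x = aX a x1 \<and> y = aY a y1) y1"
proof -
  have "\<exists>a. a < n \<and> x = aX a x1 \<and> y = aY a y1" using assms unfolding orb_def by auto
  thus ?thesis by (rule someI_ex)
qed

lemma mult_le1:
  assumes SM: "simple_mf n X aX PX Y aY PY (Fo, Fm, s)" and fin: "finite X"
    and ac: "alg_closed_field TYPE('a)"
    and PXnz: "\<And>g h x. g < n \<Longrightarrow> h < n \<Longrightarrow> x \<in> X \<Longrightarrow> PX g h x \<noteq> 0"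
    and PYnz: "\<And>g h y. g < n \<Longrightarrow> h < n \<Longrightarrow> y \<in> Y \<Longrightarrow> PY g h y \<noteq> 0"
    and PX00: "\<And>x. x \<in> X \<Longrightarrow> PX 0 0 x = 1" and PY00: "\<And>y. y \<in> Y \<Longrightarrow> PY 0 0 y = 1"
    and x1: "x1 \<in> X" and y1: "y1 \<in> Y"
  shows "mm x1 y1 \<le> 1"
proof (rule ccontr)
  assume "\<not> mm x1 y1 \<le> 1"
  hence m2: "2 \<le> mm x1 y1" by simp
  let ?m = "mm x1 y1"
  obtain h0 where h0: "h0 < n" "aX h0 x1 = x1" "aY h0 y1 = y1"
    and pw: "\<And>k. k < n \<Longrightarrow> aX k x1 = x1 \<Longrightarrow> aY k y1 = y1 \<Longrightarrow> \<exists>c j. Tm k x1 y1 = c \<cdot>\<^sub>m (Tm h0 x1 y1 ^\<^sub>m j)"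
    using stab_pow[OF x1 y1 PXnz PYnz PX00 PY00] by blast
  have stc: "Tm k x1 y1 \<in> carrier_mat ?m ?m" if "k < n" "aX k x1 = x1" "aY k y1 = y1" for k
    using Tm_car[OF that(1) x1 y1] act_inv1[OF n1 GY that(1) y1] that by simp
  have Pc: "Tm h0 x1 y1 \<in> carrier_mat ?m ?m" using stc[OF h0] .
  obtain E0 v where E0: "E0 \<in> carrier_mat ?m ?m" and E0P: "E0 * Tm h0 x1 y1 = Tm h0 x1 y1 * E0"
    and E0nz: "E0 \<noteq> 0\<^sub>m ?m ?m" and v: "v \<in> carrier_vec ?m" "v \<noteq> 0\<^sub>v ?m" and E0v: "E0 *\<^sub>v v = 0\<^sub>v ?m"
    using E0_exists[OF ac Pc m2] by blast
  have comm: "E0 * Tm k x1 y1 = Tm k x1 y1 * E0" if kk: "k < n" "aX k x1 = x1" "aY k y1 = y1" for k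
  proof -
    obtain c j where "Tm k x1 y1 = c \<cdot>\<^sub>m (Tm h0 x1 y1 ^\<^sub>m j)" using pw[OF kk] by blast
    thus ?thesis using spow_comm[OF E0 Pc E0P] by simp
  qed
  define ach where "ach x y = (SOME a. a < n \<and> x = aX a x1 \<and> y = aY a y1)" for x y
  have ach: "ach x y < n \<and> x = aX (ach x y) x1 \<and> y = aY (ach x y) y1" if "(x,y) \<in> orb x1 y1" for x y
    unfolding ach_def by (rule orb_choice[OF that])
  define E :: "'x \<Rightarrow> 'y \<Rightarrow> 'a mat" where "E x y = (if (x,y) \<in> orb x1 y1 then Ti (ach x y) x1 y * E0 * Tm (ach x y) x1 y
      else 0\<^sub>m (mm x y) (mm x y))" for x y
  have orbY: "y \<in> Y" if "(x,y) \<in> orb x1 y1" for x y using that act_in[OF n1 GY _ y1] unfolding orb_def by auto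
  have Tac: "Tm (ach x y) x1 y \<in> carrier_mat ?m (mm x y)" "Ti (ach x y) x1 y \<in> carrier_mat (mm x y) ?m"
    "Ti (ach x y) x1 y * Tm (ach x y) x1 y = 1\<^sub>m (mm x y)" "Tm (ach x y) x1 y * Ti (ach x y) x1 y = 1\<^sub>m ?m"
    if o: "(x,y) \<in> orb x1 y1" for x y
  proof -
    note a = ach[OF o]
    have y: "y \<in> Y" by (rule orbY[OF o])
    have yy: "aY (ginv n (ach x y)) y = y1" using act_inv1[OF n1 GY conjunct1[OF a] y1] a by simp
    have xx: "aX (ach x y) x1 = x" using a by simp
    show "Tm (ach x y) x1 y \<in> carrier_mat ?m (mm x y)" using Tm_car[OF conjunct1[OF a] x1 y] unfolding yy xx .
    show "Ti (ach x y) x1 y \<in> carrier_mat (mm x y) ?m" using Ti_props(1)[OF conjunct1[OF a] x1 y] unfolding yy xx .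
    show "Ti (ach x y) x1 y * Tm (ach x y) x1 y = 1\<^sub>m (mm x y)" using Ti_props(2)[OF conjunct1[OF a] x1 y] unfolding yy xx .
    show "Tm (ach x y) x1 y * Ti (ach x y) x1 y = 1\<^sub>m ?m" using Ti_props(3)[OF conjunct1[OF a] x1 y] unfolding yy xx .
  qed
  have Ec: "E x y \<in> carrier_mat (mm x y) (mm x y)" for x y
    unfolding E_def using Tac[of x y] E0 by auto
  have Eeq: "s g (simple_obj x) y * E (aX g x) y = E x (aY (ginv n g) y) * s g (simple_obj x) y"
    if g: "g < n" and x: "x \<in> X" and y: "y \<in> Y" for g x y
  proof -
    let ?y' = "aY (ginv n g) y" and ?gx = "aX g x"
    have sT: "s g (simple_obj x) y = Tm g x y" unfolding Tm_def ..
    note Tg = Tm_car[OF g x y]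
    have y': "?y' \<in> Y" by (rule act_inv_in[OF n1 GY g y])
    show ?thesis
    proof (cases "(?gx, y) \<in> orb x1 y1")
      case False
      hence F2: "(x, ?y') \<notin> orb x1 y1" using orb_shift[OF g x y x1 y1] by simp
      show ?thesis unfolding sT E_def using False F2 Tg by simp
    next
      case True
      hence T2: "(x, ?y') \<in> orb x1 y1" using orb_shift[OF g x y x1 y1] by simp
      define a where "a = ach ?gx y"
      define b where "b = ach x ?y'"
      have a: "a < n" "?gx = aX a x1" "y = aY a y1" using ach[OF True] unfolding a_def by auto
      have b: "b < n" "x = aX b x1" "?y' = aY b y1" using ach[OF T2] unfolding b_def by auto
      define Ta where "Ta = Tm a x1 y"
      define Tia where "Tia = Ti a x1 y"
      define Tb where "Tb = Tm b x1 ?y'"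
      define Tib where "Tib = Ti b x1 ?y'"
      define Tgg where "Tgg = Tm g x y"
      note TA = Tac[OF True, folded a_def, folded Ta_def Tia_def]
      note TB = Tac[OF T2, folded b_def, folded Tb_def Tib_def]
      have Tgc: "Tgg \<in> carrier_mat (mm x ?y') (mm ?gx y)" unfolding Tgg_def by (rule Tg)
      define k where "k = (ginv n a + (g + b) mod n) mod n"
      have kn: "k < n" unfolding k_def using n1 by simp
      have gbn: "(g + b) mod n < n" using n1 by simp
      have akgb: "(a + k) mod n = (g + b) mod n" unfolding k_def by (rule mod_inv_lemma[OF n1 a(1) gbn])
      have gbx: "aX ((g + b) mod n) x1 = aX a x1" using act_comp[OF n1 GX g b(1) x1] b(2) a(2) by simp
      have gby: "aY ((g + b) mod n) y1 = aY a y1" using act_comp[OF n1 GY g b(1) y1] b(3) act_inv2[OF n1 GY g y] a(3) by simp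
      have gi: "ginv n a < n" by (rule ginv_lt[OF n1])
      have kx: "aX k x1 = x1" unfolding k_def using act_comp[OF n1 GX gi gbn x1] gbx act_inv1[OF n1 GX a(1) x1] by simp
      have ky: "aY k y1 = y1" unfolding k_def using act_comp[OF n1 GY gi gbn y1] gby act_inv1[OF n1 GY a(1) y1] by simp
      have Tkc: "Tm k x1 y1 \<in> carrier_mat ?m ?m" by (rule stc[OF kn kx ky])
      have r1: "PY g b y \<cdot>\<^sub>m Tm ((g + b) mod n) x1 y = PX g b (aX ((g + b) mod n) x1) \<cdot>\<^sub>m (Tb * Tgg)"
        using TR[OF g b(1) x1 y] unfolding Tb_def Tgg_def b(2)[symmetric] .
      have yy1: "aY (ginv n a) y = y1" using act_inv1[OF n1 GY a(1) y1] a(3) by simp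
      have r2: "PY a k y \<cdot>\<^sub>m Tm ((g + b) mod n) x1 y = PX a k (aX ((a + k) mod n) x1) \<cdot>\<^sub>m (Tm k x1 y1 * Ta)"
        using TR[OF a(1) kn x1 y] unfolding akgb yy1 kx Ta_def .
      define c1 where "c1 = inverse (PX g b (aX ((g + b) mod n) x1)) * PY g b y"
      define c2 where "c2 = inverse (PY a k y) * PX a k (aX ((a + k) mod n) x1)"
      have gbx': "aX ((g + b) mod n) x1 \<in> X" by (rule act_in[OF n1 GX gbn x1])
      have TbTg: "Tb * Tgg = c1 \<cdot>\<^sub>m Tm ((g + b) mod n) x1 y"
        using smult_cancel2[OF PXnz[OF g b(1) gbx'] r1[symmetric]] unfolding c1_def by (simp add: smult_smult_mat2)
      have Tgb: "Tm ((g + b) mod n) x1 y = c2 \<cdot>\<^sub>m (Tm k x1 y1 * Ta)"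
        using smult_cancel2[OF PYnz[OF a(1) kn y] r2] unfolding c2_def by (simp add: smult_smult_mat2)
      define W where "W = (c1 * c2) \<cdot>\<^sub>m Tm k x1 y1"
      have Wc: "W \<in> carrier_mat ?m ?m" unfolding W_def using Tkc by simp
      have WE: "E0 * W = W * E0" unfolding W_def
        using comm[OF kn kx ky] E0 Tkc by (simp add: mult_smult_distrib[OF E0 Tkc] mult_smult_assoc_mat[OF Tkc E0])
      have WTa: "W * Ta = Tb * Tgg"
        unfolding TbTg Tgb W_def using Tkc TA(1) by (simp add: smult_smult_mat2 mult_smult_assoc_mat mult_smult_distrib)
      have Tg_eq: "Tgg = Tib * (W * Ta)"
        unfolding WTa using assoc_mult_mat[OF TB(2) TB(1) Tgc] TB(3) Tgc by simp
      have f1: "Ta * (Tia * (E0 * Ta)) = E0 * Ta"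
        using assoc_mult_mat[OF TA(1) TA(2) mult_carrier_mat[OF E0 TA(1)], symmetric] TA(4) E0 TA(1) by simp
      have f2: "Tb * (Tib * (W * Ta)) = W * Ta"
        using assoc_mult_mat[OF TB(1) TB(2) mult_carrier_mat[OF Wc TA(1)], symmetric] TB(4) Wc TA(1) by simp
      have f3: "W * (E0 * Ta) = E0 * (W * Ta)"
        using assoc_mult_mat[OF Wc E0 TA(1), symmetric] assoc_mult_mat[OF E0 Wc TA(1), symmetric] WE by simp
      have "Tgg * (Tia * E0 * Ta) = Tib * (W * (Ta * (Tia * (E0 * Ta))))"
        unfolding Tg_eq using cD[OF TA(1)] cD[OF TA(2)] cD[OF TB(2)] cD[OF Wc] cD[OF E0] by (simp add: assoc_dim)
      also have "\<dots> = Tib * (E0 * (W * Ta))" unfolding f1 f3 ..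
      also have "\<dots> = Tib * (E0 * (Tb * (Tib * (W * Ta))))" unfolding f2 ..
      also have "\<dots> = (Tib * E0 * Tb) * (Tib * (W * Ta))"
        using cD[OF TA(1)] cD[OF TB(1)] cD[OF TB(2)] cD[OF Wc] cD[OF E0] by (simp add: assoc_dim)
      also have "\<dots> = (Tib * E0 * Tb) * Tgg" unfolding Tg_eq[symmetric] ..
      finally have main: "Tgg * (Tia * E0 * Ta) = (Tib * E0 * Tb) * Tgg" .
      show ?thesis unfolding sT E_def using True T2 main
        unfolding a_def[symmetric] b_def[symmetric] Ta_def[symmetric] Tia_def[symmetric] Tb_def[symmetric]
          Tib_def[symmetric] Tgg_def[symmetric] by simp
    qed
  qed
  have o1: "(x1, y1) \<in> orb x1 y1" by (rule orb_self[OF x1 y1])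
  define a0 where "a0 = ach x1 y1"
  note T0c = Tac[OF o1, folded a0_def]
  have E11: "E x1 y1 = Ti a0 x1 y1 * E0 * Tm a0 x1 y1" unfolding E_def a0_def using o1 by simp
  from schurE[OF SM fin Ec Eeq] show False
  proof
    assume "\<forall>x\<in>X. \<forall>y\<in>Y. E x y = 0\<^sub>m (mm x y) (mm x y)"
    hence z: "Ti a0 x1 y1 * E0 * Tm a0 x1 y1 = 0\<^sub>m ?m ?m" using x1 y1 E11 by auto
    have "E0 = (Tm a0 x1 y1 * Ti a0 x1 y1) * E0 * (Tm a0 x1 y1 * Ti a0 x1 y1)" using T0c E0 by simp
    also have "\<dots> = Tm a0 x1 y1 * (Ti a0 x1 y1 * E0 * Tm a0 x1 y1) * Ti a0 x1 y1"
      using cD[OF T0c(1)] cD[OF T0c(2)] cD[OF E0] by (simp add: assoc_dim)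
    also have "\<dots> = 0\<^sub>m ?m ?m" unfolding z using T0c by simp
    finally show False using E0nz by simp
  next
    assume i: "\<forall>x\<in>X. \<forall>y\<in>Y. \<forall>c N. N \<in> carrier_mat (mm x y) c \<longrightarrow> E x y * N = 0\<^sub>m (mm x y) c \<longrightarrow> N = 0\<^sub>m (mm x y) c"
    define V where "V = mat ?m 1 (\<lambda>(i,_). v $ i)"
    have Vc: "V \<in> carrier_mat ?m 1" unfolding V_def by simp
    have EV: "E0 * V = 0\<^sub>m ?m 1"
    proof (rule eq_matI)
      fix i j assume ij: "i < dim_row (0\<^sub>m ?m 1 :: 'a mat)" "j < dim_col (0\<^sub>m ?m 1 :: 'a mat)"
      have "(E0 * V) $$ (i,j) = (E0 *\<^sub>v v) $ i"
        using ij E0 v unfolding V_def by (auto simp: scalar_prod_def row_def col_def intro!: sum.cong)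
      thus "(E0 * V) $$ (i,j) = 0\<^sub>m ?m 1 $$ (i,j)" using E0v ij by simp
    qed (insert E0 Vc, auto)
    let ?N = "Ti a0 x1 y1 * V"
    have Nc: "?N \<in> carrier_mat ?m 1" using T0c(2) Vc by simp
    have "E x1 y1 * ?N = Ti a0 x1 y1 * (E0 * ((Tm a0 x1 y1 * Ti a0 x1 y1) * V))"
      unfolding E11 using cD[OF T0c(1)] cD[OF T0c(2)] cD[OF E0] cD[OF Vc] by (simp add: assoc_dim)
    also have "\<dots> = 0\<^sub>m ?m 1" unfolding T0c(4) using Vc EV T0c by simp
    finally have "?N = 0\<^sub>m ?m 1" using i x1 y1 Nc by blast
    hence "Tm a0 x1 y1 * ?N = 0\<^sub>m ?m 1" using T0c by simp
    hence V0: "V = 0\<^sub>m ?m 1" using assoc_mult_mat[OF T0c(1) T0c(2) Vc] T0c(4) Vc by simp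
    have "v = 0\<^sub>v ?m"
    proof (rule eq_vecI)
      fix i assume i: "i < dim_vec (0\<^sub>v ?m :: 'a vec)"
      have "V $$ (i,0) = 0\<^sub>m ?m 1 $$ (i,0)" unfolding V0 ..
      thus "v $ i = 0\<^sub>v ?m $ i" using i unfolding V_def by simp
    qed (insert v, auto)
    thus False using v by simp
  qed
qed

end


theorem lemma5p20:
  fixes n :: nat and \<omega> :: "nat \<Rightarrow> nat \<Rightarrow> nat \<Rightarrow> 'a::field"
    and X :: "'x set" and aX :: "nat \<Rightarrow> 'x \<Rightarrow> 'x" and PX :: "nat \<Rightarrow> nat \<Rightarrow> 'x \<Rightarrow> 'a"
    and Y :: "'y set" and aY :: "nat \<Rightarrow> 'y \<Rightarrow> 'y" and PY :: "nat \<Rightarrow> nat \<Rightarrow> 'y \<Rightarrow> 'a"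
    and F :: "('x, 'y, 'a) mfun"
  assumes "alg_closed_field TYPE('a)"
    and "n \<ge> 1"
    and "normalized_3cocycle n \<omega>"
    and "finite X" and "is_Gset n X aX" and "is_Psi n \<omega> X aX PX"
    and "finite Y" and "is_Gset n Y aY" and "is_Psi n \<omega> Y aY PY"
    and "simple_mf n X aX PX Y aY PY F"
  shows "\<exists>x0\<in>X. \<exists>y0\<in>Y. \<forall>x\<in>X. \<forall>y\<in>Y.
           hom_dim Y (fst F (simple_obj x)) (simple_obj y)
             = (if (x, y) \<in> {(aX g x0, aY g y0) | g. g < n} then 1 else 0)"
proof -
  note ac = assms(1) and n1 = assms(2) and finX = assms(4) and GX = assms(5) and PsX = assms(6)
    and finY = assms(7) and GY = assms(8) and PsY = assms(9) and SM0 = assms(10)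
  obtain Fo Fm s where F: "F = (Fo, Fm, s)" by (cases F)
  have SM: "simple_mf n X aX PX Y aY PY (Fo, Fm, s)" using SM0 unfolding F .
  have MF: "module_functor n X aX PX Y aY PY (Fo, Fm, s)" using SM unfolding simple_mf_def by blast
  have nz: "\<not> mf_zero X (Fo, Fm, s)" using SM unfolding simple_mf_def by blast
  interpret M: MFS n X aX PX Y aY PY Fo Fm s
    by (unfold_locales; (rule n1 GX GY MF)?)
  have PXnz: "\<And>g h x. g < n \<Longrightarrow> h < n \<Longrightarrow> x \<in> X \<Longrightarrow> PX g h x \<noteq> 0"
    using PsX unfolding is_Psi_def by blast
  have PYnz: "\<And>g h y. g < n \<Longrightarrow> h < n \<Longrightarrow> y \<in> Y \<Longrightarrow> PY g h y \<noteq> 0"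
    using PsY unfolding is_Psi_def by blast
  have n0: "0 < n" using n1 by simp
  have PX00: "\<And>x. x \<in> X \<Longrightarrow> PX 0 0 x = 1"
    using PsX n0 unfolding is_Psi_def by blast
  have PY00: "\<And>y. y \<in> Y \<Longrightarrow> PY 0 0 y = 1"
    using PsY n0 unfolding is_Psi_def by blast
  obtain x0 y0 where x0: "x0 \<in> X" and y0: "y0 \<in> Y" and m0: "M.mm x0 y0 \<noteq> 0"
    using M.nonempty[OF finX nz] by blast
  have off: "\<forall>x\<in>X. \<forall>y\<in>Y. (x,y) \<notin> M.orb x0 y0 \<longrightarrow> M.mm x y = 0"
    by (rule M.orbit_support[OF SM finX x0 y0 m0])
  have le1: "\<And>x y. x \<in> X \<Longrightarrow> y \<in> Y \<Longrightarrow> M.mm x y \<le> 1"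
    by (rule M.mult_le1[OF SM finX ac PXnz PYnz PX00 PY00])
  have m01: "M.mm x0 y0 = 1" using le1[OF x0 y0] m0 by simp
  have on: "M.mm x y = 1" if o: "(x,y) \<in> M.orb x0 y0" for x y
  proof -
    obtain g where g: "g < n" and xe: "x = aX g x0" and ye: "y = aY g y0" using o unfolding M.orb_def by auto
    have x: "x \<in> X" unfolding xe by (rule act_in[OF n1 GX g x0])
    have y: "y \<in> Y" unfolding ye by (rule act_in[OF n1 GY g y0])
    have yy: "aY (ginv n g) y = y0" unfolding ye by (rule act_inv1[OF n1 GY g y0])
    have T: "M.Tm g x0 y \<in> carrier_mat 1 (M.mm x y)" using M.Tm_car[OF g x0 y] unfolding yy xe[symmetric] m01 .
    have Ti: "M.Ti g x0 y \<in> carrier_mat (M.mm x y) 1" using M.Ti_props(1)[OF g x0 y] unfolding yy xe[symmetric] m01 .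
    have TT: "M.Tm g x0 y * M.Ti g x0 y = 1\<^sub>m 1" using M.Ti_props(3)[OF g x0 y] unfolding yy m01 .
    show ?thesis
    proof (rule ccontr)
      assume "M.mm x y \<noteq> 1"
      hence z: "M.mm x y = 0" using le1[OF x y] by simp
      have "(1\<^sub>m 1 :: 'a mat) = 0\<^sub>m 1 1" unfolding TT[symmetric] by (rule mult_zero_dim0, insert T Ti z, auto)
      hence "(1::nat) = 0" by (rule M.one_eq_zero)
      thus False by simp
    qed
  qed
  have hd: "hom_dim Y (fst F (simple_obj x)) (simple_obj y) = M.mm x y" if y: "y \<in> Y" for x y
  proof -
    have "hom_dim Y (fst F (simple_obj x)) (simple_obj y) = (\<Sum>z\<in>Y. Fo (simple_obj x) z * (if z = y then 1 else 0))"
      unfolding hom_dim_def F simple_obj_def by simp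
    also have "\<dots> = Fo (simple_obj x) y" using finY y by (simp add: if_distrib[of "\<lambda>t. _ * t"] cong: if_cong)
    finally show ?thesis unfolding M.mm_def .
  qed
  show ?thesis
  proof (intro bexI[OF _ x0] bexI[OF _ y0] ballI)
    fix x y assume x: "x \<in> X" and y: "y \<in> Y"
    show "hom_dim Y (fst F (simple_obj x)) (simple_obj y) = (if (x, y) \<in> {(aX g x0, aY g y0) | g. g < n} then 1 else 0)"
      unfolding hd[OF y] using on off x y unfolding M.orb_def by auto
  qed
qed

end
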